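(* Let $(V,\leq)$ be a countably infinite partially ordered set and let $(V,E)$ be a directed acyclic graph whose transitive closure induces $\leq$ (i.e. for $x\neq y$, $x\leq y$ if and only if there is a directed path in $(V,E)$ from $x$ to $y$). Let $\mu_1,\mu_2$ be probability measures on $V$. The following statements are equivalent: (1) $\mu_1\preceq\mu_2$; (2) there exists a coupling between $\mu_1$ and $\mu_2$ which is compatible with $\leq$; (3) there exists a finitely decomposable flow $Q$ on $(V,E)$ such that $\operatorname{div}Q=\mu_1-\mu_2$.
   Context: Digraphs have no loops. A coupling between probability measures $\mu_1,\mu_2$ on $V$ is a probability measure $\rho$ on $V\times V$ with $\sum_{y}\rho(x,y)=\mu_1(x)$ and $\sum_x\rho(x,y)=\mu_2(y)$ for all $x,y$; it is compatible with $\leq$ if $\rho(\{(x,y):x\leq y\})=1$. $\mu_1\preceq\mu_2$ means $\mathbb E_{\mu_1}(f)\leq\mathbb E_{\mu_2}(f)$ for every bounded increasing $f:V\to\mathbb R$. A flow on $(V,E)$ is a map $Q:E\to[0,+\infty)$; its divergence is $\operatorname{div}Q(x)=\sum_{y:(x,y)\in E}Q(x,y)-\sum_{y:(y,x)\in E}Q(y,x)$, defined when both series converge for every $x$. For a directed path $\gamma=(x_0,\dots,x_n)$ let $Q_\gamma(x,y)=1$ if $(x,y)=(x_i,x_{i+1})$ for some $i$ and $0$ otherwise. A path is self-avoiding if its vertices are pairwise distinct. A flow $Q$ is finitely decomposable if there exist a countable family $\{\gamma_n\}$ of finite self-avoiding directed paths in $(V,E)$ and weights $q_n\ge 0$ with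 $\sum_n q_n<+\infty$ such that $Q=\sum_n q_nQ_{\gamma_n}$ pointwise on $E$. *)

theory Defs
  imports "HOL-Probability.Probability"
begin

definition stoch_le :: "('a::order) pmf \<Rightarrow> 'a pmf \<Rightarrow> bool" where
  "stoch_le \<mu>1 \<mu>2 \<longleftrightarrow>
     (\<forall>f :: 'a \<Rightarrow> real. bounded (range f) \<longrightarrow> mono f \<longrightarrow>
        measure_pmf.expectation \<mu>1 f \<le> measure_pmf.expectation \<mu>2 f)"

definition is_coupling :: "('a \<times> 'a) pmf \<Rightarrow> 'a pmf \<Rightarrow> 'a pmf \<Rightarrow> bool" where
  "is_coupling \<rho> \<mu>1 \<mu>2 \<longleftrightarrow> map_pmf fst \<rho> = \<mu>1 \<and> map_pmf snd \<rho> = \<mu>2"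

definition order_compatible :: "(('a::order) \<times> 'a) pmf \<Rightarrow> bool" where
  "order_compatible \<rho> \<longleftrightarrow> measure_pmf.prob \<rho> {(x, y). x \<le> y} = 1"

text \<open>A flow on (V,E): nonnegative values on the edges (values off E are irrelevant).\<close>
definition is_flow :: "('a \<times> 'a) set \<Rightarrow> ('a \<Rightarrow> 'a \<Rightarrow> real) \<Rightarrow> bool" where
  "is_flow E Q \<longleftrightarrow> (\<forall>x y. (x, y) \<in> E \<longrightarrow> Q x y \<ge> 0)"

definition div_defined :: "('a \<times> 'a) set \<Rightarrow> ('a \<Rightarrow> 'a \<Rightarrow> real) \<Rightarrow> 'a \<Rightarrow> bool" where
  "div_defined E Q x \<longleftrightarrow>
     (\<lambda>y. Q x y) summable_on {y. (x, y) \<in> E} \<and> (\<lambda>y. Q y x) summable_on {y. (y, x) \<in> E}"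

definition divergence :: "('a \<times> 'a) set \<Rightarrow> ('a \<Rightarrow> 'a \<Rightarrow> real) \<Rightarrow> 'a \<Rightarrow> real" where
  "divergence E Q x = (\<Sum>\<^sub>\<infinity>y\<in>{y. (x, y) \<in> E}. Q x y) - (\<Sum>\<^sub>\<infinity>y\<in>{y. (y, x) \<in> E}. Q y x)"

definition directed_path :: "('a \<times> 'a) set \<Rightarrow> 'a list \<Rightarrow> bool" where
  "directed_path E \<gamma> \<longleftrightarrow> \<gamma> \<noteq> [] \<and> (\<forall>i. Suc i < length \<gamma> \<longrightarrow> (\<gamma> ! i, \<gamma> ! Suc i) \<in> E)"

definition self_avoiding :: "'a list \<Rightarrow> bool" where
  "self_avoiding \<gamma> \<longleftrightarrow> distinct \<gamma>"

definition path_flow :: "'a list \<Rightarrow> 'a \<Rightarrow> 'a \<Rightarrow> real" where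
  "path_flow \<gamma> x y = (if \<exists>i. Suc i < length \<gamma> \<and> \<gamma> ! i = x \<and> \<gamma> ! Suc i = y then 1 else 0)"

definition finitely_decomposable :: "('a \<times> 'a) set \<Rightarrow> ('a \<Rightarrow> 'a \<Rightarrow> real) \<Rightarrow> bool" where
  "finitely_decomposable E Q \<longleftrightarrow>
     (\<exists>(I :: nat set) (\<gamma> :: nat \<Rightarrow> 'a list) (q :: nat \<Rightarrow> real).
        (\<forall>n\<in>I. directed_path E (\<gamma> n) \<and> self_avoiding (\<gamma> n) \<and> q n \<ge> 0) \<and>
        q summable_on I \<and>
        (\<forall>x y. (x, y) \<in> E \<longrightarrow> ((\<lambda>n. q n * path_flow (\<gamma> n) x y) has_sum Q x y) I))"

end

theory Submission
  imports Defs
begin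


definition nbr :: "('s \<Rightarrow> 't \<Rightarrow> bool) \<Rightarrow> 't set \<Rightarrow> 's set \<Rightarrow> 't set" where
  "nbr R T A = {t\<in>T. \<exists>s\<in>A. R s t}"

definition tvalid :: "'s set \<Rightarrow> 't set \<Rightarrow> ('s \<Rightarrow> 't \<Rightarrow> bool) \<Rightarrow> ('s \<Rightarrow> real) \<Rightarrow> ('t \<Rightarrow> real) \<Rightarrow> bool" where
  "tvalid S T R a b \<longleftrightarrow> finite S \<and> finite T \<and> (\<forall>s\<in>S. 0 \<le> a s) \<and> (\<forall>t\<in>T. 0 \<le> b t)
     \<and> sum a S = sum b T \<and> (\<forall>A\<subseteq>S. sum a A \<le> sum b (nbr R T A))"

definition tsol :: "'s set \<Rightarrow> 't set \<Rightarrow> ('s \<Rightarrow> 't \<Rightarrow> bool) \<Rightarrow> ('s \<Rightarrow> real) \<Rightarrow> ('t \<Rightarrow> real) \<Rightarrow> ('s \<Rightarrow> 't \<Rightarrow> real) \<Rightarrow> bool" where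
  "tsol S T R a b f \<longleftrightarrow> (\<forall>s t. 0 \<le> f s t) \<and> (\<forall>s t. f s t \<noteq> 0 \<longrightarrow> s \<in> S \<and> t \<in> T \<and> R s t)
     \<and> (\<forall>s\<in>S. sum (f s) T = a s) \<and> (\<forall>t\<in>T. (\<Sum>s\<in>S. f s t) = b t)"

definition smaller_ok :: "nat \<Rightarrow> ('s \<Rightarrow> 't \<Rightarrow> bool) \<Rightarrow> bool" where
  "smaller_ok n R \<longleftrightarrow> (\<forall>(S::'s set) (T::'t set) a b. card S + card T < n \<longrightarrow> tvalid S T R a b \<longrightarrow> (\<exists>f. tsol S T R a b f))"

lemma tsolI:
  assumes "\<And>s t. 0 \<le> f s t" "\<And>s t. f s t \<noteq> 0 \<Longrightarrow> s \<in> S \<and> t \<in> T \<and> R s t"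
    "\<And>s. s \<in> S \<Longrightarrow> sum (f s) T = a s" "\<And>t. t \<in> T \<Longrightarrow> (\<Sum>s\<in>S. f s t) = b t"
  shows "tsol S T R a b f"
  using assms unfolding tsol_def by blast

lemma H1:
  assumes ok: "smaller_ok (card S + card T) R" and v: "tvalid S T R a b" and s: "s \<in> S" "a s = 0"
  shows "\<exists>f. tsol S T R a b f"
proof -
  have fin: "finite S" "finite T" using v by (auto simp: tvalid_def)
  have "tvalid (S - {s}) T R a b"
    using v s unfolding tvalid_def by (auto simp: sum_diff1)
  moreover have "card (S - {s}) + card T < card S + card T"
    using card_Diff1_less[OF fin(1) s(1)] by simp
  ultimately obtain f where f: "tsol (S - {s}) T R a b f" using ok unfolding smaller_ok_def by blast
  have fs: "f s t = 0" for t using f unfolding tsol_def by auto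
  have "tsol S T R a b f"
  proof (rule tsolI)
    show "0 \<le> f x y" for x y using f by (auto simp: tsol_def)
    show "x \<in> S \<and> y \<in> T \<and> R x y" if "f x y \<noteq> 0" for x y using f that by (auto simp: tsol_def)
    show "sum (f x) T = a x" if "x \<in> S" for x
      using f that s fs by (cases "x = s") (auto simp: tsol_def)
    show "(\<Sum>x\<in>S. f x y) = b y" if "y \<in> T" for y
    proof -
      have "(\<Sum>x\<in>S. f x y) = (\<Sum>x\<in>S - {s}. f x y)"
        using s fin fs by (simp add: sum_diff1)
      then show ?thesis using f that by (simp add: tsol_def)
    qed
  qed
  then show ?thesis by blast
qed

lemma H2:
  assumes ok: "smaller_ok (card S + card T) R" and v: "tvalid S T R a b" and t: "t \<in> T" "b t = 0"
  shows "\<exists>f. tsol S T R a b f"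
proof -
  have fin: "finite S" "finite T" using v by (auto simp: tvalid_def)
  have nb: "nbr R (T - {t}) A = nbr R T A - {t}" for A by (auto simp: nbr_def)
  have "tvalid S (T - {t}) R a b"
    using v t fin unfolding tvalid_def nb
    by (auto simp: sum_diff1 nbr_def)
  moreover have "card S + card (T - {t}) < card S + card T"
    using card_Diff1_less[OF fin(2) t(1)] by simp
  ultimately obtain f where f: "tsol S (T - {t}) R a b f" using ok unfolding smaller_ok_def by blast
  have ft: "f x t = 0" for x using f unfolding tsol_def by auto
  have "tsol S T R a b f"
  proof (rule tsolI)
    show "0 \<le> f x y" for x y using f by (auto simp: tsol_def)
    show "x \<in> S \<and> y \<in> T \<and> R x y" if "f x y \<noteq> 0" for x y using f that by (auto simp: tsol_def)
    show "(\<Sum>x\<in>S. f x y) = b y" if "y \<in> T" for y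
      using f that t ft by (cases "y = t") (auto simp: tsol_def)
    show "sum (f x) T = a x" if "x \<in> S" for x
    proof -
      have "sum (f x) T = sum (f x) (T - {t})"
        using t fin ft by (simp add: sum_diff1)
      then show ?thesis using f that by (simp add: tsol_def)
    qed
  qed
  then show ?thesis by blast
qed

lemma H3:
  assumes ok: "smaller_ok (card S + card T) R" and v: "tvalid S T R a b"
    and A: "A \<subseteq> S" "A \<noteq> {}" "A \<noteq> S" "sum a A = sum b (nbr R T A)"
  shows "\<exists>f. tsol S T R a b f"
proof -
  have fin: "finite S" "finite T" using v by (auto simp: tvalid_def)
  have finA: "finite A" using A fin finite_subset by blast
  define NA where "NA = nbr R T A"
  have NAT: "NA \<subseteq> T" by (auto simp: NA_def nbr_def)
  have cA: "card A < card S" using A fin by (meson psubset_card_mono psubsetI)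
  have cSA: "card (S - A) < card S" using A fin
  proof -
    have "S - A \<subset> S" using A by blast
    then show ?thesis using fin psubset_card_mono by blast
  qed
  have v1: "tvalid A NA R a b"
    unfolding tvalid_def
  proof (intro conjI allI impI ballI)
    show "finite A" by fact
    show "finite NA" using NAT fin finite_subset by blast
    show "0 \<le> a s" if "s \<in> A" for s using v that A by (auto simp: tvalid_def)
    show "0 \<le> b t" if "t \<in> NA" for t using v that NAT by (auto simp: tvalid_def)
    show "sum a A = sum b NA" using A by (simp add: NA_def)
    show "sum a B \<le> sum b (nbr R NA B)" if "B \<subseteq> A" for B
    proof -
      have "nbr R NA B = nbr R T B" using that by (auto simp: nbr_def NA_def)
      then show ?thesis using v that A by (auto simp: tvalid_def)
    qed
  qed
  have v2: "tvalid (S - A) (T - NA) R a b"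
    unfolding tvalid_def
  proof (intro conjI allI impI ballI)
    show "finite (S - A)" using fin by simp
    show "finite (T - NA)" using fin by simp
    show "0 \<le> a s" if "s \<in> S - A" for s using v that by (auto simp: tvalid_def)
    show "0 \<le> b t" if "t \<in> T - NA" for t using v that by (auto simp: tvalid_def)
    show "sum a (S - A) = sum b (T - NA)"
      using v A NAT fin by (simp add: sum_diff tvalid_def NA_def)
    show "sum a B \<le> sum b (nbr R (T - NA) B)" if B: "B \<subseteq> S - A" for B
    proof -
      have finB: "finite B" using B fin finite_subset by blast
      have "A \<union> B \<subseteq> S" using A B by blast
      then have "sum a (A \<union> B) \<le> sum b (nbr R T (A \<union> B))" using v by (simp add: tvalid_def)
      moreover have "sum a (A \<union> B) = sum a A + sum a B" using B finA finB
        by (subst sum.union_disjoint) auto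
      moreover have "nbr R T (A \<union> B) = NA \<union> nbr R (T - NA) B" by (auto simp: nbr_def NA_def)
      moreover have "sum b (NA \<union> nbr R (T - NA) B) = sum b NA + sum b (nbr R (T - NA) B)"
        using fin NAT by (subst sum.union_disjoint) (auto simp: nbr_def intro: finite_subset)
      ultimately show ?thesis using A by (simp add: NA_def)
    qed
  qed
  have "card NA \<le> card T" using NAT fin(2) by (rule card_mono[rotated])
  then have c1: "card A + card NA < card S + card T" using cA by linarith
  have "card (T - NA) \<le> card T" using fin(2) by (rule card_mono) blast
  then have c2: "card (S - A) + card (T - NA) < card S + card T" using cSA by linarith
  obtain f1 where f1: "tsol A NA R a b f1" using ok v1 c1 unfolding smaller_ok_def by blast
  obtain f2 where f2: "tsol (S - A) (T - NA) R a b f2" using ok v2 c2 unfolding smaller_ok_def by blast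
  define f where "f s t = f1 s t + f2 s t" for s t
  have f1z: "f1 s t = 0" if "s \<notin> A \<or> t \<notin> NA" for s t using f1 that by (auto simp: tsol_def)
  have f2z: "f2 s t = 0" if "s \<notin> S - A \<or> t \<notin> T - NA" for s t using f2 that by (auto simp: tsol_def)
  have "tsol S T R a b f"
  proof (rule tsolI)
    show "0 \<le> f x y" for x y using f1 f2 by (auto simp: tsol_def f_def)
    show "x \<in> S \<and> y \<in> T \<and> R x y" if "f x y \<noteq> 0" for x y
    proof -
      have "f1 x y \<noteq> 0 \<or> f2 x y \<noteq> 0" using that by (auto simp: f_def)
      then show ?thesis
      proof
        assume "f1 x y \<noteq> 0" then have "x \<in> A \<and> y \<in> NA \<and> R x y" using f1 unfolding tsol_def by blast
        then show ?thesis using A NAT by blast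
      next
        assume "f2 x y \<noteq> 0" then have "x \<in> S - A \<and> y \<in> T - NA \<and> R x y" using f2 unfolding tsol_def by blast
        then show ?thesis by blast
      qed
    qed
    show "sum (f x) T = a x" if "x \<in> S" for x
    proof (cases "x \<in> A")
      case True
      have "sum (f x) T = sum (f1 x) T" using f2z True by (simp add: f_def sum.distrib)
      also have "\<dots> = sum (f1 x) NA" using f1z NAT fin by (intro sum.mono_neutral_right) auto
      finally show ?thesis using f1 True by (simp add: tsol_def)
    next
      case False
      have "sum (f x) T = sum (f2 x) T" using f1z False by (simp add: f_def sum.distrib)
      also have "\<dots> = sum (f2 x) (T - NA)" using f2z fin by (intro sum.mono_neutral_right) auto
      finally show ?thesis using f2 False that by (simp add: tsol_def)
    qed
    show "(\<Sum>x\<in>S. f x y) = b y" if "y \<in> T" for y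
    proof (cases "y \<in> NA")
      case True
      have "(\<Sum>x\<in>S. f x y) = (\<Sum>x\<in>S. f1 x y)" using f2z True by (simp add: f_def sum.distrib)
      also have "\<dots> = (\<Sum>x\<in>A. f1 x y)" using f1z A fin by (intro sum.mono_neutral_right) auto
      finally show ?thesis using f1 True by (simp add: tsol_def)
    next
      case False
      have "(\<Sum>x\<in>S. f x y) = (\<Sum>x\<in>S. f2 x y)" using f1z False by (simp add: f_def sum.distrib)
      also have "\<dots> = (\<Sum>x\<in>S - A. f2 x y)" using f2z fin by (intro sum.mono_neutral_right) auto
      finally show ?thesis using f2 False that by (simp add: tsol_def)
    qed
  qed
  then show ?thesis by blast
qed

lemma sum_upd_minus:
  fixes a :: "'x \<Rightarrow> real"
  assumes "finite A"
  shows "sum (a(s := a s - e)) A = sum a A - (if s \<in> A then e else 0)"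
proof (cases "s \<in> A")
  case True
  have "sum (a(s := a s - e)) A = (a s - e) + sum (a(s := a s - e)) (A - {s})"
    using assms True by (simp add: sum.remove)
  also have "sum (a(s := a s - e)) (A - {s}) = sum a (A - {s})" by (rule sum.cong) auto
  also have "sum a A = a s + sum a (A - {s})" using assms True by (simp add: sum.remove)
  ultimately show ?thesis using True by simp
next
  case False
  have "sum (a(s := a s - e)) A = sum a A" using False by (intro sum.cong) auto
  then show ?thesis using False by simp
qed

lemma transport_step:
  assumes ok: "smaller_ok (card S + card T) R" and v: "tvalid S T R a b"
  shows "\<exists>f. tsol S T R a b f"
proof -
  have fin: "finite S" "finite T" using v by (auto simp: tvalid_def)
  show ?thesis
  proof (cases "S = {}")
    case True
    have "sum b T = 0" using v True by (simp add: tvalid_def)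
    then have bz: "\<forall>t\<in>T. b t = 0" using v fin by (simp add: tvalid_def sum_nonneg_eq_0_iff)
    have "tsol S T R a b (\<lambda>_ _. 0)" by (rule tsolI) (use True bz in auto)
    then show ?thesis by blast
  next
    case Sne: False
    show ?thesis
    proof (cases "(\<exists>s\<in>S. a s = 0) \<or> (\<exists>t\<in>T. b t = 0) \<or>
        (\<exists>A. A \<subseteq> S \<and> A \<noteq> {} \<and> A \<noteq> S \<and> sum a A = sum b (nbr R T A))")
      case True
      then show ?thesis using H1[OF ok v] H2[OF ok v] H3[OF ok v] by blast
    next
      case False
      have apos: "a s > 0" if "s \<in> S" for s
      proof -
        have "a s \<noteq> 0" using False that by blast
        moreover have "a s \<ge> 0" using v that by (simp add: tvalid_def)
        ultimately show ?thesis by simp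
      qed
      have bpos: "b t > 0" if "t \<in> T" for t
      proof -
        have "b t \<noteq> 0" using False that by blast
        moreover have "b t \<ge> 0" using v that by (simp add: tvalid_def)
        ultimately show ?thesis by simp
      qed
      have strict: "sum a A < sum b (nbr R T A)" if "A \<subseteq> S" "A \<noteq> {}" "A \<noteq> S" for A
      proof -
        have "sum a A \<noteq> sum b (nbr R T A)" using False that by blast
        moreover have "sum a A \<le> sum b (nbr R T A)" using v that by (simp add: tvalid_def)
        ultimately show ?thesis by simp
      qed
      obtain s where s: "s \<in> S" using Sne by blast
      have "a s \<le> sum b (nbr R T {s})" using v s by (auto simp: tvalid_def)
      then have "nbr R T {s} \<noteq> {}" using apos[OF s] by auto
      then obtain t where t: "t \<in> T" "R s t" by (auto simp: nbr_def)
      define C where "C = {a s, b t} \<union> (\<lambda>A. sum b (nbr R T A) - sum a A) ` {A. A \<subseteq> S \<and> s \<notin> A \<and> t \<in> nbr R T A}"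
      have "finite {A. A \<subseteq> S \<and> s \<notin> A \<and> t \<in> nbr R T A}"
        by (rule finite_subset[of _ "Pow S"]) (use fin in auto)
      then have finC: "finite C" unfolding C_def by blast
      define e where "e = Min C"
      have Cpos: "\<forall>c\<in>C. c > 0"
      proof
        fix c assume "c \<in> C"
        then consider "c = a s" | "c = b t" | A where "A \<subseteq> S" "s \<notin> A" "t \<in> nbr R T A" "c = sum b (nbr R T A) - sum a A"
          unfolding C_def by blast
        then show "c > 0"
        proof cases
          case 1 then show ?thesis using apos s by simp
        next
          case 2 then show ?thesis using bpos t by simp
        next
          case (3 A)
          have "A \<noteq> {}" using 3 by (auto simp: nbr_def)
          moreover have "A \<noteq> S" using 3 s by blast
          ultimately show ?thesis using strict 3 by simp
        qed
      qed
      have "C \<noteq> {}" unfolding C_def by blast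
      then have eC: "e \<in> C" unfolding e_def using finC by (intro Min_in)
      have epos: "e > 0" using Cpos eC by blast
      have ele: "e \<le> c" if "c \<in> C" for c unfolding e_def using finC that by simp
      define a' where "a' = a(s := a s - e)"
      define b' where "b' = b(t := b t - e)"
      have ea: "e \<le> a s" by (rule ele) (simp add: C_def)
      have eb: "e \<le> b t" by (rule ele) (simp add: C_def)
      have sa': "sum a' A = sum a A - (if s \<in> A then e else 0)" if "finite A" for A
        unfolding a'_def using that by (rule sum_upd_minus)
      have sb': "sum b' A = sum b A - (if t \<in> A then e else 0)" if "finite A" for A
        unfolding b'_def using that by (rule sum_upd_minus)
      have v': "tvalid S T R a' b'"
        unfolding tvalid_def
      proof (intro conjI allI impI ballI)
        show "finite S" "finite T" by fact+
        show "0 \<le> a' x" if "x \<in> S" for x using v that ea by (auto simp: a'_def tvalid_def)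
        show "0 \<le> b' x" if "x \<in> T" for x using v that eb by (auto simp: b'_def tvalid_def)
        show "sum a' S = sum b' T" using sa'[OF fin(1)] sb'[OF fin(2)] s t v by (simp add: tvalid_def)
        show "sum a' A \<le> sum b' (nbr R T A)" if A: "A \<subseteq> S" for A
        proof -
          have finA: "finite A" using A fin finite_subset by blast
          have finN: "finite (nbr R T A)" using fin by (simp add: nbr_def)
          have base: "sum a A \<le> sum b (nbr R T A)" using v A by (simp add: tvalid_def)
          show ?thesis
          proof (cases "s \<in> A")
            case True
            then have "t \<in> nbr R T A" using t by (auto simp: nbr_def)
            then show ?thesis using True base sa'[OF finA] sb'[OF finN] by simp
          next
            case False
            show ?thesis
            proof (cases "t \<in> nbr R T A")
              case True
              then have "sum b (nbr R T A) - sum a A \<in> C" using False A unfolding C_def by blast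
              then have "e \<le> sum b (nbr R T A) - sum a A" by (rule ele)
              then show ?thesis using True False sa'[OF finA] sb'[OF finN] by simp
            next
              case False2: False
              then show ?thesis using False base sa'[OF finA] sb'[OF finN] by simp
            qed
          qed
        qed
      qed
      have "\<exists>f. tsol S T R a' b' f"
      proof -
        from eC consider "e = a s" | "e = b t" | A where "A \<subseteq> S" "s \<notin> A" "t \<in> nbr R T A" "e = sum b (nbr R T A) - sum a A"
          unfolding C_def by blast
        then show ?thesis
        proof cases
          case 1 then show ?thesis using H1[OF ok v' s] by (simp add: a'_def)
        next
          case 2 then show ?thesis using H2[OF ok v' t(1)] by (simp add: b'_def)
        next
          case (3 A)
          have "A \<noteq> {}" using 3 by (auto simp: nbr_def)
          moreover have "A \<noteq> S" using 3 s by blast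
          moreover have "finite A" using 3 fin finite_subset by blast
          moreover have "finite (nbr R T A)" using fin by (simp add: nbr_def)
          ultimately have "sum a' A = sum b' (nbr R T A)" using 3 sa' sb' by simp
          then show ?thesis using H3[OF ok v' 3(1)] \<open>A \<noteq> {}\<close> \<open>A \<noteq> S\<close> by blast
        qed
      qed
      then obtain f' where f': "tsol S T R a' b' f'" by blast
      define f where "f x y = f' x y + (if x = s \<and> y = t then e else 0)" for x y
      have "tsol S T R a b f"
      proof (rule tsolI)
        show "0 \<le> f x y" for x y using f' epos by (auto simp: tsol_def f_def)
        show "x \<in> S \<and> y \<in> T \<and> R x y" if "f x y \<noteq> 0" for x y
        proof (cases "x = s \<and> y = t")
          case True then show ?thesis using s t by simp
        next
          case False then have "f' x y \<noteq> 0" using that by (auto simp: f_def split: if_splits)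
          then show ?thesis using f' unfolding tsol_def by blast
        qed
        show "sum (f x) T = a x" if "x \<in> S" for x
        proof -
          have "sum (f x) T = sum (f' x) T + (if x = s then e else 0)"
            using fin t by (simp add: f_def sum.distrib)
          then show ?thesis using f' that by (simp add: tsol_def a'_def)
        qed
        show "(\<Sum>x\<in>S. f x y) = b y" if "y \<in> T" for y
        proof -
          have "(\<Sum>x\<in>S. f x y) = (\<Sum>x\<in>S. f' x y) + (if y = t then e else 0)"
            using fin s by (simp add: f_def sum.distrib)
          then show ?thesis using f' that by (simp add: tsol_def b'_def)
        qed
      qed
      then show ?thesis by blast
    qed
  qed
qed

lemma transport:
  assumes "tvalid S T R a b"
  shows "\<exists>f. tsol S T R a b f"
  using assms
proof (induction "card S + card T" arbitrary: S T a b rule: less_induct)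
  case less
  have "smaller_ok (card S + card T) R"
    unfolding smaller_ok_def by (intro allI impI) (rule less.hyps)
  then show ?case using transport_step less.prems by blast
qed


lemma pmf_summable: "pmf p summable_on A"
proof -
  have "Infinite_Sum.abs_summable_on (pmf p) A"
    using pmf_abs_summable abs_summable_equivalent by blast
  then show ?thesis by simp
qed

lemma pmf_has_sum_UNIV: "(pmf p has_sum 1) UNIV"
proof -
  have "infsetsum (pmf p) UNIV = 1" by (rule infsetsum_pmf_eq_1) simp
  then have "infsum (pmf p) UNIV = 1" by (metis infsetsum_infsum pmf_abs_summable)
  then show ?thesis using pmf_summable by (simp add: has_sum_iff)
qed

lemma prob_compl_pmf: "measure_pmf.prob p (- A) = 1 - measure_pmf.prob p A"
  using measure_pmf.prob_compl[of A p] by (simp add: Compl_eq_Diff_UNIV)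

lemma tail_small:
  assumes "e > 0"
  shows "\<exists>G. finite G \<and> measure_pmf.prob p (- G) \<le> e"
proof -
  have "\<exists>F. finite F \<and> F \<subseteq> UNIV \<and> dist (sum (pmf p) F) (infsum (pmf p) UNIV) \<le> e"
    by (rule infsum_finite_approximation[OF pmf_summable assms])
  then obtain G where G: "finite G" "dist (sum (pmf p) G) (infsum (pmf p) UNIV) \<le> e"
    by blast
  have i1: "infsum (pmf p) UNIV = 1" using pmf_has_sum_UNIV has_sum_iff by blast
  have "\<bar>sum (pmf p) G - 1\<bar> \<le> e" using G(2) unfolding i1 dist_real_def .
  then have "1 - sum (pmf p) G \<le> e" by linarith
  moreover have "measure_pmf.prob p (- G) = 1 - sum (pmf p) G"
    unfolding prob_compl_pmf measure_measure_pmf_finite[OF G(1)] ..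
  ultimately show ?thesis using G(1) by auto
qed

lemma upset_le:
  assumes st: "stoch_le \<mu>1 \<mu>2" and U: "\<And>x y. x \<in> U \<Longrightarrow> x \<le> y \<Longrightarrow> y \<in> U"
  shows "measure_pmf.prob \<mu>1 U \<le> measure_pmf.prob \<mu>2 U"
proof -
  define f :: "'a \<Rightarrow> real" where "f = indicator U"
  have "bounded (range f)" unfolding f_def
    by (rule boundedI[of _ 1]) (auto simp: indicator_def)
  moreover have "mono f" unfolding f_def mono_def using U by (auto simp: indicator_def)
  ultimately have "measure_pmf.expectation \<mu>1 f \<le> measure_pmf.expectation \<mu>2 f"
    using st unfolding stoch_le_def by blast
  then show ?thesis unfolding f_def by simp
qed


definition srcA :: "'a pmf \<Rightarrow> 'a set \<Rightarrow> 'a option \<Rightarrow> real" where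
  "srcA p F z = (case z of None \<Rightarrow> measure_pmf.prob p (- F) | Some x \<Rightarrow> pmf p x)"

definition relO :: "('a::order) option \<Rightarrow> 'a option \<Rightarrow> bool" where
  "relO z z' = (case (z, z') of (Some x, Some y) \<Rightarrow> x \<le> y | _ \<Rightarrow> True)"

lemma sum_Some: "sum g (Some ` F) = sum (\<lambda>x. g (Some x)) F"
  by (subst sum.reindex) (auto simp: inj_on_def)

lemma sum_optS:
  assumes "finite F"
  shows "sum g (insert None (Some ` F)) = g None + sum (\<lambda>x. g (Some x)) F"
  using assms by (simp add: sum_Some)

lemma srcA_total:
  assumes "finite F"
  shows "sum (srcA p F) (insert None (Some ` F)) = 1"
  unfolding sum_optS[OF assms] by (simp add: srcA_def prob_compl_pmf measure_measure_pmf_finite[OF assms])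

lemma srcA_nonneg: "0 \<le> srcA p F z"
  by (cases z) (auto simp: srcA_def)

lemma finite_approx:
  fixes \<mu>1 \<mu>2 :: "('a::order) pmf"
  assumes st: "stoch_le \<mu>1 \<mu>2" and F: "finite F"
  shows "\<exists>f. tsol (insert None (Some ` F)) (insert None (Some ` F)) relO (srcA \<mu>1 F) (srcA \<mu>2 F) f"
proof (rule transport)
  define S where "S = insert None (Some ` F)"
  show "tvalid S S relO (srcA \<mu>1 F) (srcA \<mu>2 F)"
    unfolding tvalid_def
  proof (intro conjI ballI allI impI)
    show "finite S" using F by (simp add: S_def)
    show "finite S" using F by (simp add: S_def)
    show "0 \<le> srcA \<mu>1 F s" for s by (rule srcA_nonneg)
    show "0 \<le> srcA \<mu>2 F s" for s by (rule srcA_nonneg)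
    show "sum (srcA \<mu>1 F) S = sum (srcA \<mu>2 F) S" using srcA_total[OF F] by (simp add: S_def)
    show "sum (srcA \<mu>1 F) A \<le> sum (srcA \<mu>2 F) (nbr relO S A)" if A: "A \<subseteq> S" for A
    proof (cases "None \<in> A")
      case True
      have "nbr relO S A = S" unfolding nbr_def relO_def using True by (auto intro!: bexI[of _ None])
      moreover have "sum (srcA \<mu>1 F) A \<le> sum (srcA \<mu>1 F) S"
        using A \<open>finite S\<close> by (intro sum_mono2) (auto simp: srcA_nonneg)
      ultimately show ?thesis using srcA_total[OF F] by (simp add: S_def)
    next
      case False
      define B where "B = {x\<in>F. Some x \<in> A}"
      have AB: "A = Some ` B" using A False unfolding B_def S_def
      proof (intro equalityI subsetI)
        fix z assume z: "z \<in> A"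
        then obtain x where x: "z = Some x" "x \<in> F" using A False unfolding S_def by blast
        then show "z \<in> Some ` {x \<in> F. Some x \<in> A}" using z by blast
      qed blast
      have finB: "finite B" using F by (simp add: B_def)
      show ?thesis
      proof (cases "B = {}")
        case True
        then show ?thesis using AB by (simp add: sum_nonneg srcA_nonneg)
      next
        case Bne: False
        define U where "U = {y. \<exists>x\<in>B. x \<le> y}"
        have NB: "nbr relO S A = insert None (Some ` (U \<inter> F))"
        proof (intro equalityI subsetI)
          fix z assume "z \<in> nbr relO S A"
          then obtain s where z: "z \<in> S" "s \<in> A" "relO s z" unfolding nbr_def by blast
          show "z \<in> insert None (Some ` (U \<inter> F))"
          proof (cases z)
            case (Some y)
            obtain x where "s = Some x" "x \<in> B" using z(2) AB by blast
            then show ?thesis using z Some unfolding relO_def U_def S_def by auto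
          qed simp
        next
          fix z assume z: "z \<in> insert None (Some ` (U \<inter> F))"
          obtain x0 where x0: "x0 \<in> B" using Bne by blast
          show "z \<in> nbr relO S A"
          proof (cases z)
            case None
            then show ?thesis using x0 AB unfolding nbr_def relO_def S_def by auto
          next
            case (Some y)
            then have y: "y \<in> U" "y \<in> F" using z by auto
            then obtain x where "x \<in> B" "x \<le> y" unfolding U_def by blast
            then show ?thesis using Some y AB unfolding nbr_def relO_def S_def by force
          qed
        qed
        have "sum (srcA \<mu>1 F) A = sum (pmf \<mu>1) B"
          unfolding AB sum_Some by (simp add: srcA_def)
        also have "\<dots> = measure_pmf.prob \<mu>1 B" using finB by (simp add: measure_measure_pmf_finite)
        also have "\<dots> \<le> measure_pmf.prob \<mu>1 U"
          by (rule measure_pmf.finite_measure_mono) (auto simp: U_def)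
        also have "\<dots> \<le> measure_pmf.prob \<mu>2 U"
          by (rule upset_le[OF st]) (auto simp: U_def intro: order_trans)
        also have "\<dots> \<le> measure_pmf.prob \<mu>2 (U \<inter> F) + measure_pmf.prob \<mu>2 (- F)"
        proof -
          have "measure_pmf.prob \<mu>2 U \<le> measure_pmf.prob \<mu>2 ((U \<inter> F) \<union> (- F))"
            by (rule measure_pmf.finite_measure_mono) auto
          also have "\<dots> \<le> measure_pmf.prob \<mu>2 (U \<inter> F) + measure_pmf.prob \<mu>2 (- F)"
            by (rule measure_subadditive) (auto simp: measure_pmf.emeasure_eq_measure)
          finally show ?thesis .
        qed
        also have "\<dots> = sum (srcA \<mu>2 F) (nbr relO S A)"
          unfolding NB sum_optS[OF finite_Int[OF disjI2[OF F]]] by (simp add: srcA_def measure_measure_pmf_finite[OF finite_Int[OF disjI2[OF F]]])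
        finally show ?thesis .
      qed
    qed
  qed
qed


lemma pmf_le_compl: "x \<notin> F \<Longrightarrow> pmf p x \<le> measure_pmf.prob p (- F)"
  using measure_pmf.finite_measure_mono[of "{x}" "- F" p] by (simp add: measure_pmf_single)

lemma row_bounds:
  fixes g :: "'a option \<Rightarrow> 'a option \<Rightarrow> real"
  assumes F: "finite F" and G: "finite G" and nn: "\<And>u v. 0 \<le> g u v"
    and row: "\<And>x. x \<in> F \<Longrightarrow> g (Some x) None + (\<Sum>y\<in>F. g (Some x) (Some y)) = pmf p x"
    and col: "\<And>y. y \<in> F \<Longrightarrow> g None (Some y) + (\<Sum>x\<in>F. g (Some x) (Some y)) = pmf q y"
    and colN: "g None None + (\<Sum>x\<in>F. g (Some x) None) = measure_pmf.prob q (- F)"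
  shows "(\<Sum>y\<in>G. if x \<in> F \<and> y \<in> F then g (Some x) (Some y) else 0) \<le> pmf p x"
    and "pmf p x - (measure_pmf.prob p (- G) + measure_pmf.prob q (- G))
           - (measure_pmf.prob p (- F) + measure_pmf.prob q (- F))
         \<le> (\<Sum>y\<in>G. if x \<in> F \<and> y \<in> F then g (Some x) (Some y) else 0)"
proof -
  define h where "h y = (if x \<in> F \<and> y \<in> F then g (Some x) (Some y) else 0)" for y
  have hnn: "0 \<le> h y" for y using nn by (simp add: h_def)
  have m0: "0 \<le> measure_pmf.prob p A" "0 \<le> measure_pmf.prob q A" for A by simp_all
  have "sum h G \<le> pmf p x \<and> pmf p x - (measure_pmf.prob p (- G) + measure_pmf.prob q (- G))
           - (measure_pmf.prob p (- F) + measure_pmf.prob q (- F)) \<le> sum h G"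
  proof (cases "x \<in> F")
    case False
    then have "sum h G = 0" by (simp add: h_def)
    moreover have "pmf p x \<le> measure_pmf.prob p (- F)" using False by (rule pmf_le_compl)
    ultimately show ?thesis using m0[of "- G"] m0[of "- F"] pmf_nonneg[of p x] by linarith
  next
    case True
    have sGF: "sum h G = (\<Sum>y\<in>G \<inter> F. g (Some x) (Some y))"
      unfolding h_def using G True by (simp add: sum.If_cases Int_commute)
    have sF: "(\<Sum>y\<in>F. g (Some x) (Some y)) = (\<Sum>y\<in>G \<inter> F. g (Some x) (Some y)) + (\<Sum>y\<in>F - G. g (Some x) (Some y))"
      using F by (metis Diff_Int2 Int_commute inf.idem sum.Int_Diff)
    have gN: "g (Some x) None \<le> measure_pmf.prob q (- F)"
    proof -
      have "g (Some x) None \<le> (\<Sum>x\<in>F. g (Some x) None)"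
        using F True nn by (intro member_le_sum) auto
      then show ?thesis using colN nn[of None None] by linarith
    qed
    have ent: "g (Some x) (Some y) \<le> pmf q y" if "y \<in> F" for y
    proof -
      have "g (Some x) (Some y) \<le> (\<Sum>x\<in>F. g (Some x) (Some y))"
        using F True nn by (intro member_le_sum) auto
      then show ?thesis using col[OF that] nn[of None "Some y"] by linarith
    qed
    have "(\<Sum>y\<in>F - G. g (Some x) (Some y)) \<le> (\<Sum>y\<in>F - G. pmf q y)"
      by (intro sum_mono ent) auto
    also have "\<dots> = measure_pmf.prob q (F - G)" using F by (simp add: measure_measure_pmf_finite)
    also have "\<dots> \<le> measure_pmf.prob q (- G)" by (rule measure_pmf.finite_measure_mono) auto
    finally have tail: "(\<Sum>y\<in>F - G. g (Some x) (Some y)) \<le> measure_pmf.prob q (- G)" .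
    have tnn: "0 \<le> (\<Sum>y\<in>F - G. g (Some x) (Some y))" by (intro sum_nonneg nn)
    show ?thesis using row[OF True] sGF sF gN tail tnn nn[of "Some x" None] m0[of "- G"] m0[of "- F"]
      by linarith
  qed
  then show "(\<Sum>y\<in>G. if x \<in> F \<and> y \<in> F then g (Some x) (Some y) else 0) \<le> pmf p x"
    and "pmf p x - (measure_pmf.prob p (- G) + measure_pmf.prob q (- G))
           - (measure_pmf.prob p (- F) + measure_pmf.prob q (- F))
         \<le> (\<Sum>y\<in>G. if x \<in> F \<and> y \<in> F then g (Some x) (Some y) else 0)"
    unfolding h_def by auto
qed


definition dd :: "'a pmf \<Rightarrow> 'a pmf \<Rightarrow> 'a set \<Rightarrow> real" where
  "dd p q G = measure_pmf.prob p (- G) + measure_pmf.prob q (- G)"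

definition KK :: "('a::order) pmf \<Rightarrow> 'a pmf \<Rightarrow> 'a set \<Rightarrow> ('a \<times> 'a \<Rightarrow> real) set" where
  "KK p q F = {r. (\<forall>z. 0 \<le> r z \<and> r z \<le> 1) \<and> (\<forall>x y. x \<in> F \<longrightarrow> y \<in> F \<longrightarrow> \<not> x \<le> y \<longrightarrow> r (x, y) = 0)
     \<and> (\<forall>x G. finite G \<longrightarrow> (\<Sum>y\<in>G. r (x, y)) \<le> pmf p x)
     \<and> (\<forall>y G. finite G \<longrightarrow> (\<Sum>x\<in>G. r (x, y)) \<le> pmf q y)
     \<and> (\<forall>x G. finite G \<longrightarrow> pmf p x - dd p q G - dd p q F \<le> (\<Sum>y\<in>G. r (x, y)))
     \<and> (\<forall>y G. finite G \<longrightarrow> pmf q y - dd p q G - dd p q F \<le> (\<Sum>x\<in>G. r (x, y)))}"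

lemma KK_nonempty:
  fixes \<mu>1 \<mu>2 :: "('a::order) pmf"
  assumes st: "stoch_le \<mu>1 \<mu>2" and F: "finite F"
  shows "\<exists>r. r \<in> KK \<mu>1 \<mu>2 F"
proof -
  define S where "S = insert None (Some ` F)"
  obtain f where f: "tsol S S relO (srcA \<mu>1 F) (srcA \<mu>2 F) f"
    using finite_approx[OF st F] unfolding S_def by blast
  have nn: "\<And>u v. 0 \<le> f u v" using f by (simp add: tsol_def)
  have supp: "\<And>u v. f u v \<noteq> 0 \<Longrightarrow> relO u v" using f by (simp add: tsol_def)
  have row: "f (Some x) None + (\<Sum>y\<in>F. f (Some x) (Some y)) = pmf \<mu>1 x" if "x \<in> F" for x
    using f that F unfolding tsol_def S_def by (simp add: sum_optS srcA_def sum_Some)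
  have col: "f None (Some y) + (\<Sum>x\<in>F. f (Some x) (Some y)) = pmf \<mu>2 y" if "y \<in> F" for y
  proof -
    have "(\<Sum>s\<in>S. f s (Some y)) = srcA \<mu>2 F (Some y)" using f that unfolding tsol_def S_def by simp
    then show ?thesis using F unfolding S_def by (simp add: sum_optS srcA_def sum_Some)
  qed
  have colN: "f None None + (\<Sum>x\<in>F. f (Some x) None) = measure_pmf.prob \<mu>2 (- F)"
  proof -
    have "(\<Sum>s\<in>S. f s None) = srcA \<mu>2 F None" using f unfolding tsol_def S_def by simp
    then show ?thesis using F unfolding S_def by (simp add: sum_optS srcA_def sum_Some)
  qed
  have rowN: "f None None + (\<Sum>y\<in>F. f None (Some y)) = measure_pmf.prob \<mu>1 (- F)"
  proof -
    have "sum (f None) S = srcA \<mu>1 F None" using f unfolding tsol_def S_def by simp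
    then show ?thesis using F unfolding S_def by (simp add: sum_optS srcA_def sum_Some)
  qed
  define r where "r z = (if fst z \<in> F \<and> snd z \<in> F then f (Some (fst z)) (Some (snd z)) else 0)" for z
  have r_eq: "r (x, y) = (if x \<in> F \<and> y \<in> F then f (Some x) (Some y) else 0)" for x y
    by (simp add: r_def)
  have r_eq': "r (x, y) = (if y \<in> F \<and> x \<in> F then (\<lambda>u v. f v u) (Some y) (Some x) else 0)" for x y
    by (auto simp: r_def)
  have R1: "(\<Sum>y\<in>G. r (x, y)) \<le> pmf \<mu>1 x"
    "pmf \<mu>1 x - dd \<mu>1 \<mu>2 G - dd \<mu>1 \<mu>2 F \<le> (\<Sum>y\<in>G. r (x, y))" if "finite G" for x G
    using row_bounds[OF F that nn row col colN, of x] unfolding r_eq dd_def by simp_all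
  have R2: "(\<Sum>x\<in>G. r (x, y)) \<le> pmf \<mu>2 y"
    "pmf \<mu>2 y - dd \<mu>1 \<mu>2 G - dd \<mu>1 \<mu>2 F \<le> (\<Sum>x\<in>G. r (x, y))" if "finite G" for y G
    using row_bounds[OF F that, of "\<lambda>u v. f v u" \<mu>2 \<mu>1 y] nn col row rowN
    unfolding r_eq' dd_def by (simp_all add: add.commute)
  have "r \<in> KK \<mu>1 \<mu>2 F"
    unfolding KK_def
  proof (intro CollectI conjI allI impI)
    fix z
    show "0 \<le> r z" using nn by (simp add: r_def)
    have "r z = (\<Sum>y\<in>{snd z}. r (fst z, y))" by simp
    also have "\<dots> \<le> pmf \<mu>1 (fst z)" by (rule R1) simp
    also have "\<dots> \<le> 1" by (simp add: pmf_le_1)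
    finally show "r z \<le> 1" .
  next
    fix x y assume "x \<in> F" "y \<in> F" "\<not> x \<le> y"
    then show "r (x, y) = 0" using supp[of "Some x" "Some y"] by (auto simp: r_def relO_def)
  qed (use R1 R2 in auto)
  then show ?thesis by blast
qed


lemma KK_D1:
  assumes "r \<in> KK p q F" shows "0 \<le> r z \<and> r z \<le> 1"
proof -
  have "\<forall>z. 0 \<le> r z \<and> r z \<le> 1" using assms unfolding KK_def mem_Collect_eq by (elim conjE) assumption
  then show ?thesis by blast
qed

lemma closed_imp_const: "(P \<Longrightarrow> closed {x. Q x}) \<Longrightarrow> closed {x. P \<longrightarrow> Q x}"
  by (cases P) auto

lemma cont_coord: "continuous_on UNIV (\<lambda>r::'b \<Rightarrow> real. r i)"
  by (rule continuous_on_product_coordinates)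

lemma cont_sum_coord: "continuous_on UNIV (\<lambda>r::'b \<Rightarrow> real. \<Sum>i\<in>G. r (h i))"
  by (intro continuous_on_sum cont_coord)

lemma closed_le_sum:
  "closed {r::'b \<Rightarrow> real. (\<Sum>i\<in>G. r (h i)) \<le> c}"
  by (rule closed_Collect_le[OF cont_sum_coord continuous_on_const])

lemma closed_ge_sum:
  "closed {r::'b \<Rightarrow> real. c \<le> (\<Sum>i\<in>G. r (h i))}"
  by (rule closed_Collect_le[OF continuous_on_const cont_sum_coord])

lemma KK_closed: "closed (KK p q F)"
proof -
  have c1: "closed {r::'a \<times> 'a \<Rightarrow> real. \<forall>z. 0 \<le> r z \<and> r z \<le> 1}"
    by (intro closed_Collect_all closed_Collect_conj closed_Collect_le continuous_on_const cont_coord)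
  have c2: "closed {r::'a \<times> 'a \<Rightarrow> real. \<forall>x y. x \<in> F \<longrightarrow> y \<in> F \<longrightarrow> \<not> x \<le> y \<longrightarrow> r (x, y) = 0}"
    by (intro closed_Collect_all closed_imp_const closed_Collect_eq continuous_on_const cont_coord)
  have c3: "closed {r::'a \<times> 'a \<Rightarrow> real. \<forall>x G. finite G \<longrightarrow> (\<Sum>y\<in>G. r (x, y)) \<le> pmf p x}"
    by (intro closed_Collect_all closed_imp_const closed_le_sum)
  have c4: "closed {r::'a \<times> 'a \<Rightarrow> real. \<forall>y G. finite G \<longrightarrow> (\<Sum>x\<in>G. r (x, y)) \<le> pmf q y}"
    by (intro closed_Collect_all closed_imp_const closed_le_sum)
  have c5: "closed {r::'a \<times> 'a \<Rightarrow> real. \<forall>x G. finite G \<longrightarrow> pmf p x - dd p q G - dd p q F \<le> (\<Sum>y\<in>G. r (x, y))}"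
    by (intro closed_Collect_all closed_imp_const closed_ge_sum)
  have c6: "closed {r::'a \<times> 'a \<Rightarrow> real. \<forall>y G. finite G \<longrightarrow> pmf q y - dd p q G - dd p q F \<le> (\<Sum>x\<in>G. r (x, y))}"
    by (intro closed_Collect_all closed_imp_const closed_ge_sum)
  have "closed ({r::'a \<times> 'a \<Rightarrow> real. \<forall>z. 0 \<le> r z \<and> r z \<le> 1} \<inter>
     ({r. \<forall>x y. x \<in> F \<longrightarrow> y \<in> F \<longrightarrow> \<not> x \<le> y \<longrightarrow> r (x, y) = 0} \<inter>
     ({r. \<forall>x G. finite G \<longrightarrow> (\<Sum>y\<in>G. r (x, y)) \<le> pmf p x} \<inter>
     ({r. \<forall>y G. finite G \<longrightarrow> (\<Sum>x\<in>G. r (x, y)) \<le> pmf q y} \<inter>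
     ({r. \<forall>x G. finite G \<longrightarrow> pmf p x - dd p q G - dd p q F \<le> (\<Sum>y\<in>G. r (x, y))} \<inter>
     {r. \<forall>y G. finite G \<longrightarrow> pmf q y - dd p q G - dd p q F \<le> (\<Sum>x\<in>G. r (x, y))})))))"
    by (intro closed_Int c1 c2 c3 c4 c5 c6)
  then show ?thesis unfolding KK_def Collect_conj_eq .
qed

lemma dd_anti: "F \<subseteq> F' \<Longrightarrow> dd p q F' \<le> dd p q F"
  unfolding dd_def
  by (intro add_mono measure_pmf.finite_measure_mono) auto

lemma KK_anti: "F \<subseteq> F' \<Longrightarrow> KK p q F' \<subseteq> KK (p::('a::order) pmf) q F"
proof
  fix r assume FF: "F \<subseteq> F'" and r: "r \<in> KK p q F'"
  have d: "dd p q F' \<le> dd p q F" using FF by (rule dd_anti)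
  have all: "(\<forall>z. 0 \<le> r z \<and> r z \<le> 1) \<and> (\<forall>x y. x \<in> F' \<longrightarrow> y \<in> F' \<longrightarrow> \<not> x \<le> y \<longrightarrow> r (x, y) = 0)
     \<and> (\<forall>x (G::'a set). finite G \<longrightarrow> (\<Sum>y\<in>G. r (x, y)) \<le> pmf p x)
     \<and> (\<forall>y (G::'a set). finite G \<longrightarrow> (\<Sum>x\<in>G. r (x, y)) \<le> pmf q y)
     \<and> (\<forall>x (G::'a set). finite G \<longrightarrow> pmf p x - dd p q G - dd p q F' \<le> (\<Sum>y\<in>G. r (x, y)))
     \<and> (\<forall>y (G::'a set). finite G \<longrightarrow> pmf q y - dd p q G - dd p q F' \<le> (\<Sum>x\<in>G. r (x, y)))"
    using r unfolding KK_def mem_Collect_eq .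
  note r1 = all[THEN conjunct1] and r2 = all[THEN conjunct2, THEN conjunct1]
    and r3 = all[THEN conjunct2, THEN conjunct2, THEN conjunct1]
    and r4 = all[THEN conjunct2, THEN conjunct2, THEN conjunct2, THEN conjunct1]
    and r5 = all[THEN conjunct2, THEN conjunct2, THEN conjunct2, THEN conjunct2, THEN conjunct1]
    and r6 = all[THEN conjunct2, THEN conjunct2, THEN conjunct2, THEN conjunct2, THEN conjunct2]
  have r2': "\<forall>x y. x \<in> F \<longrightarrow> y \<in> F \<longrightarrow> \<not> x \<le> y \<longrightarrow> r (x, y) = 0" using r2 FF by blast
  have r5': "\<forall>x G. finite G \<longrightarrow> pmf p x - dd p q G - dd p q F \<le> (\<Sum>y\<in>G. r (x, y))"
  proof (intro allI impI)
    fix x and G :: "'a set" assume "finite G"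
    then have "pmf p x - dd p q G - dd p q F' \<le> (\<Sum>y\<in>G. r (x, y))" using r5 by blast
    then show "pmf p x - dd p q G - dd p q F \<le> (\<Sum>y\<in>G. r (x, y))" using d by linarith
  qed
  have r6': "\<forall>y G. finite G \<longrightarrow> pmf q y - dd p q G - dd p q F \<le> (\<Sum>x\<in>G. r (x, y))"
  proof (intro allI impI)
    fix y and G :: "'a set" assume "finite G"
    then have "pmf q y - dd p q G - dd p q F' \<le> (\<Sum>x\<in>G. r (x, y))" using r6 by blast
    then show "pmf q y - dd p q G - dd p q F \<le> (\<Sum>x\<in>G. r (x, y))" using d by linarith
  qed
  show "r \<in> KK p q F" unfolding KK_def mem_Collect_eq using r1 r2' r3 r4 r5' r6' by (intro conjI)
qed

lemma cpt01: "compact (PiE UNIV (\<lambda>_. {0..1::real}) :: ('b \<Rightarrow> real) set)"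
proof -
  have "compactin (product_topology (\<lambda>_. euclidean) UNIV) (PiE UNIV (\<lambda>_. {0..1::real}) :: ('b \<Rightarrow> real) set)"
    by (simp add: compactin_PiE compactin_euclidean_iff)
  then show ?thesis by (simp add: euclidean_product_topology compactin_euclidean_iff)
qed

lemma exists_limit:
  fixes \<mu>1 \<mu>2 :: "('a::order) pmf"
  assumes st: "stoch_le \<mu>1 \<mu>2"
  shows "\<exists>r. \<forall>F. finite F \<longrightarrow> r \<in> KK \<mu>1 \<mu>2 F"
proof -
  define Z where "Z = (PiE UNIV (\<lambda>_. {0..1::real}) :: ('a \<times> 'a \<Rightarrow> real) set)"
  define Fam where "Fam = KK \<mu>1 \<mu>2 ` {F. finite F}"
  have "Z \<inter> \<Inter>Fam \<noteq> {}"
  proof (rule compact_imp_fip)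
    show "compact Z" unfolding Z_def by (rule cpt01)
    show "closed T" if "T \<in> Fam" for T using that KK_closed unfolding Fam_def by blast
    show "Z \<inter> \<Inter>F' \<noteq> {}" if "finite F'" "F' \<subseteq> Fam" for F'
    proof -
      have "F' \<subseteq> KK \<mu>1 \<mu>2 ` {F. finite F}" using that(2) unfolding Fam_def .
      from finite_subset_image[OF that(1) this]
      obtain Fs where Fs: "Fs \<subseteq> {F. finite F}" "finite Fs" "F' = KK \<mu>1 \<mu>2 ` Fs"
        by (elim exE conjE)
      define U where "U = \<Union>Fs"
      have finU: "finite U" unfolding U_def using Fs by (intro finite_Union) auto
      obtain r where r: "r \<in> KK \<mu>1 \<mu>2 U" using KK_nonempty[OF st finU] by blast
      have "\<forall>z. 0 \<le> r z \<and> r z \<le> 1" using KK_D1[OF r] by blast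
      then have "r \<in> Z" unfolding Z_def PiE_UNIV_domain by auto
      moreover have "r \<in> \<Inter>F'"
      proof
        fix T assume "T \<in> F'"
        then obtain F where "F \<in> Fs" "T = KK \<mu>1 \<mu>2 F" using Fs by blast
        moreover have "F \<subseteq> U" using \<open>F \<in> Fs\<close> unfolding U_def by blast
        ultimately show "r \<in> T" using KK_anti r by blast
      qed
      ultimately show ?thesis by blast
    qed
  qed
  then obtain r where "r \<in> \<Inter>Fam" by blast
  then show ?thesis unfolding Fam_def by blast
qed


lemma has_sum_by_bounds:
  fixes g :: "'b \<Rightarrow> real"
  assumes nn: "\<And>y. 0 \<le> g y" and up: "\<And>G. finite G \<Longrightarrow> sum g G \<le> c"
    and low: "\<And>e. e > 0 \<Longrightarrow> \<exists>G. finite G \<and> c - e \<le> sum g G"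
  shows "(g has_sum c) UNIV"
proof -
  have sm: "g summable_on UNIV"
    by (rule nonneg_bdd_above_summable_on) (use nn up in \<open>auto simp: bdd_above_def\<close>)
  have "infsum g UNIV \<le> c" by (rule infsum_le_finite_sums[OF sm up]) simp
  moreover have "c \<le> infsum g UNIV"
  proof (rule field_le_epsilon)
    fix e :: real assume "e > 0"
    then obtain G where G: "finite G" "c - e \<le> sum g G" using low by blast
    have "sum g G \<le> infsum g UNIV" by (rule finite_sum_le_infsum[OF sm G(1)]) (auto simp: nn)
    then show "c \<le> infsum g UNIV + e" using G by linarith
  qed
  ultimately show ?thesis using sm by (simp add: has_sum_iff)
qed

lemma dd_small:
  assumes "e > 0" shows "\<exists>G. finite G \<and> dd p q G \<le> e"
proof -
  obtain G1 where G1: "finite G1" "measure_pmf.prob p (- G1) \<le> e / 2" using tail_small[of "e/2" p] assms by auto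
  obtain G2 where G2: "finite G2" "measure_pmf.prob q (- G2) \<le> e / 2" using tail_small[of "e/2" q] assms by auto
  have "measure_pmf.prob p (- (G1 \<union> G2)) \<le> measure_pmf.prob p (- G1)"
    by (rule measure_pmf.finite_measure_mono) auto
  moreover have "measure_pmf.prob q (- (G1 \<union> G2)) \<le> measure_pmf.prob q (- G2)"
    by (rule measure_pmf.finite_measure_mono) auto
  ultimately have "dd p q (G1 \<union> G2) \<le> e" using G1 G2 unfolding dd_def by linarith
  then show ?thesis using G1 G2 by blast
qed

lemma KK_D2:
  assumes "r \<in> KK p q F" "x \<in> F" "y \<in> F" "\<not> x \<le> y" shows "r (x, y) = 0"
proof -
  have "\<forall>x y. x \<in> F \<longrightarrow> y \<in> F \<longrightarrow> \<not> x \<le> y \<longrightarrow> r (x, y) = 0"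
    using assms(1) unfolding KK_def mem_Collect_eq by (elim conjE) assumption
  then show ?thesis using assms by blast
qed

lemma KK_D3:
  assumes "r \<in> KK p q F" "finite G"
  shows "(\<Sum>y\<in>G. r (x, y)) \<le> pmf p x" "(\<Sum>x\<in>G. r (x, y)) \<le> pmf q y"
    "pmf p x - dd p q G - dd p q F \<le> (\<Sum>y\<in>G. r (x, y))"
    "pmf q y - dd p q G - dd p q F \<le> (\<Sum>x\<in>G. r (x, y))"
proof -
  have "(\<forall>x G. finite G \<longrightarrow> (\<Sum>y\<in>G. r (x, y)) \<le> pmf p x)
     \<and> (\<forall>y G. finite G \<longrightarrow> (\<Sum>x\<in>G. r (x, y)) \<le> pmf q y)
     \<and> (\<forall>x G. finite G \<longrightarrow> pmf p x - dd p q G - dd p q F \<le> (\<Sum>y\<in>G. r (x, y)))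
     \<and> (\<forall>y G. finite G \<longrightarrow> pmf q y - dd p q G - dd p q F \<le> (\<Sum>x\<in>G. r (x, y)))"
    using assms(1) unfolding KK_def mem_Collect_eq by (elim conjE) (intro conjI)
  then show "(\<Sum>y\<in>G. r (x, y)) \<le> pmf p x" "(\<Sum>x\<in>G. r (x, y)) \<le> pmf q y"
    "pmf p x - dd p q G - dd p q F \<le> (\<Sum>y\<in>G. r (x, y))"
    "pmf q y - dd p q G - dd p q F \<le> (\<Sum>x\<in>G. r (x, y))" using assms(2) by blast+
qed

lemma limit_props:
  fixes \<mu>1 \<mu>2 :: "('a::order) pmf"
  assumes r: "\<forall>F. finite F \<longrightarrow> r \<in> KK \<mu>1 \<mu>2 F"
  shows "\<And>z. 0 \<le> r z" and "\<And>x y. \<not> x \<le> y \<Longrightarrow> r (x, y) = 0"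
    and "\<And>x. ((\<lambda>y. r (x, y)) has_sum pmf \<mu>1 x) UNIV"
    and "\<And>y. ((\<lambda>x. r (x, y)) has_sum pmf \<mu>2 y) UNIV"
proof -
  have K: "r \<in> KK \<mu>1 \<mu>2 F" if "finite F" for F using r that by blast
  show nn: "0 \<le> r z" for z using KK_D1[OF K[of "{}"]] by simp
  show "r (x, y) = 0" if "\<not> x \<le> y" for x y using KK_D2[OF K[of "{x, y}"]] that by simp
  show "((\<lambda>y. r (x, y)) has_sum pmf \<mu>1 x) UNIV" for x
  proof (rule has_sum_by_bounds)
    show "0 \<le> r (x, y)" for y by (rule nn)
    show "(\<Sum>y\<in>G. r (x, y)) \<le> pmf \<mu>1 x" if "finite G" for G using KK_D3(1)[OF K[OF that] that] .
    show "\<exists>G. finite G \<and> pmf \<mu>1 x - e \<le> (\<Sum>y\<in>G. r (x, y))" if e: "e > 0" for e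
    proof -
      have "e / 2 > 0" using e by simp
      from dd_small[OF this, of \<mu>1 \<mu>2]
      obtain G where G: "finite G" "dd \<mu>1 \<mu>2 G \<le> e / 2" by blast
      have "pmf \<mu>1 x - dd \<mu>1 \<mu>2 G - dd \<mu>1 \<mu>2 G \<le> (\<Sum>y\<in>G. r (x, y))" using KK_D3(3)[OF K[OF G(1)] G(1)] .
      then show ?thesis using G by (intro exI[of _ G]) auto
    qed
  qed
  show "((\<lambda>x. r (x, y)) has_sum pmf \<mu>2 y) UNIV" for y
  proof (rule has_sum_by_bounds)
    show "0 \<le> r (x, y)" for x by (rule nn)
    show "(\<Sum>x\<in>G. r (x, y)) \<le> pmf \<mu>2 y" if "finite G" for G using KK_D3(2)[OF K[OF that] that] .
    show "\<exists>G. finite G \<and> pmf \<mu>2 y - e \<le> (\<Sum>x\<in>G. r (x, y))" if e: "e > 0" for e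
    proof -
      have "e / 2 > 0" using e by simp
      from dd_small[OF this, of \<mu>1 \<mu>2]
      obtain G where G: "finite G" "dd \<mu>1 \<mu>2 G \<le> e / 2" by blast
      have "pmf \<mu>2 y - dd \<mu>1 \<mu>2 G - dd \<mu>1 \<mu>2 G \<le> (\<Sum>x\<in>G. r (x, y))" using KK_D3(4)[OF K[OF G(1)] G(1)] .
      then show ?thesis using G by (intro exI[of _ G]) auto
    qed
  qed
qed


lemma strassen:
  fixes \<mu>1 \<mu>2 :: "('a::order) pmf"
  assumes st: "stoch_le \<mu>1 \<mu>2"
  shows "\<exists>\<rho>. is_coupling \<rho> \<mu>1 \<mu>2 \<and> order_compatible \<rho>"
proof -
  obtain r where r: "\<forall>F. finite F \<longrightarrow> r \<in> KK \<mu>1 \<mu>2 F" using exists_limit[OF st] by blast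
  note P = limit_props[OF r]
  have nn: "\<And>z. 0 \<le> r z" by (rule P(1))
  have sm: "r summable_on Sigma UNIV (\<lambda>_. UNIV)"
    by (rule summable_on_SigmaI[where g = "pmf \<mu>1"]) (auto intro: P(3) pmf_summable nn)
  have "(\<Sum>\<^sub>\<infinity>x\<in>UNIV. \<Sum>\<^sub>\<infinity>y\<in>UNIV. r (x, y)) = infsum r (Sigma UNIV (\<lambda>_. UNIV))"
    by (rule infsum_Sigma_banach[OF sm])
  moreover have "(\<Sum>\<^sub>\<infinity>y\<in>UNIV. r (x, y)) = pmf \<mu>1 x" for x using P(3)[of x] by (simp add: has_sum_iff)
  moreover have "infsum (pmf \<mu>1) UNIV = 1" using pmf_has_sum_UNIV[of \<mu>1] has_sum_iff by blast
  ultimately have tot: "infsum r UNIV = 1" by simp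
  have sm': "r summable_on UNIV" using sm by simp
  have "Infinite_Sum.abs_summable_on r UNIV"
    using sm' by (rule summable_on_cong[THEN iffD1, rotated]) (simp add: nn)
  then have abs: "Infinite_Set_Sum.abs_summable_on r UNIV" using abs_summable_equivalent by blast
  have "infsetsum r UNIV = 1" using infsetsum_infsum[OF abs] tot by simp
  then have int1: "(\<integral>\<^sup>+ z. ennreal (r z) \<partial>count_space UNIV) = 1"
    using nn_integral_conv_infsetsum[OF abs] nn by simp
  define \<rho> where "\<rho> = embed_pmf r"
  have pr: "pmf \<rho> z = r z" for z unfolding \<rho>_def by (rule pmf_embed_pmf[OF nn int1])
  have setr: "set_pmf \<rho> = {z. r z \<noteq> 0}" unfolding \<rho>_def by (rule set_embed_pmf[OF nn int1])
  have infs: "measure_pmf.prob \<rho> A = infsum r A" for A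
    using measure_pmf_conv_infsetsum[of \<rho> A] infsetsum_infsum[OF pmf_abs_summable, of \<rho> A]
    by (simp add: pr[abs_def])
  have m1: "map_pmf fst \<rho> = \<mu>1"
  proof (rule pmf_eqI)
    fix x :: 'a
    have e: "fst -` {x} = range (Pair x)" by auto
    have "pmf (map_pmf fst \<rho>) x = infsum r (range (Pair x))" unfolding pmf_map infs e ..
    also have "\<dots> = infsum (r \<circ> Pair x) UNIV" by (rule infsum_reindex) (simp add: inj_on_def)
    also have "\<dots> = pmf \<mu>1 x" using P(3)[of x] by (simp add: has_sum_iff comp_def)
    finally show "pmf (map_pmf fst \<rho>) x = pmf \<mu>1 x" .
  qed
  have m2: "map_pmf snd \<rho> = \<mu>2"
  proof (rule pmf_eqI)
    fix y :: 'a
    have e: "snd -` {y} = range (\<lambda>x. (x, y))" by auto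
    have "pmf (map_pmf snd \<rho>) y = infsum r (range (\<lambda>x. (x, y)))" unfolding pmf_map infs e ..
    also have "\<dots> = infsum (r \<circ> (\<lambda>x. (x, y))) UNIV" by (rule infsum_reindex) (simp add: inj_on_def)
    also have "\<dots> = pmf \<mu>2 y" using P(4)[of y] by (simp add: has_sum_iff comp_def)
    finally show "pmf (map_pmf snd \<rho>) y = pmf \<mu>2 y" .
  qed
  have oc: "order_compatible \<rho>"
    unfolding order_compatible_def
  proof (subst measure_pmf.prob_eq_1)
    show "{(x, y). x \<le> y} \<in> measure_pmf.events \<rho>" by simp
    show "AE z in measure_pmf \<rho>. z \<in> {(x, y). x \<le> y}"
      unfolding AE_measure_pmf_iff setr using P(2) by fastforce
  qed
  show ?thesis using m1 m2 oc unfolding is_coupling_def by blast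
qed


lemma coupling_stoch:
  fixes \<mu>1 \<mu>2 :: "('a::order) pmf"
  assumes c: "is_coupling \<rho> \<mu>1 \<mu>2" and oc: "order_compatible \<rho>"
  shows "stoch_le \<mu>1 \<mu>2"
  unfolding stoch_le_def
proof (intro allI impI)
  fix f :: "'a \<Rightarrow> real" assume b: "bounded (range f)" and m: "mono f"
  obtain B where B: "\<And>x. \<bar>f x\<bar> \<le> B" using b unfolding bounded_real by blast
  have AE: "AE z in measure_pmf \<rho>. z \<in> {(x, y). x \<le> y}"
    using oc unfolding order_compatible_def by (subst (asm) measure_pmf.prob_eq_1) auto
  have i1: "integrable (measure_pmf \<rho>) (\<lambda>z. f (fst z))"
    by (rule measure_pmf.integrable_const_bound[where B = B]) (auto simp: B)
  have i2: "integrable (measure_pmf \<rho>) (\<lambda>z. f (snd z))"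
    by (rule measure_pmf.integrable_const_bound[where B = B]) (auto simp: B)
  have "measure_pmf.expectation \<rho> (\<lambda>z. f (fst z)) \<le> measure_pmf.expectation \<rho> (\<lambda>z. f (snd z))"
    by (rule integral_mono_AE[OF i1 i2]) (use AE m in \<open>auto simp: mono_def elim!: AE_mp\<close>)
  then show "measure_pmf.expectation \<mu>1 f \<le> measure_pmf.expectation \<mu>2 f"
    using c unfolding is_coupling_def by (auto simp flip: integral_map_pmf)
qed

lemma path_trancl:
  assumes "directed_path E g" "i < j" "j < length g"
  shows "(g ! i, g ! j) \<in> E\<^sup>+"
  using assms(2,3)
proof (induction j)
  case 0 then show ?case by simp
next
  case (Suc j)
  have e: "(g ! j, g ! Suc j) \<in> E" using assms(1) Suc.prems unfolding directed_path_def by blast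
  show ?case
  proof (cases "i = j")
    case True then show ?thesis using e by auto
  next
    case False
    then have "(g ! i, g ! j) \<in> E\<^sup>+" using Suc by simp
    then show ?thesis using e by (rule trancl_into_trancl)
  qed
qed

lemma acyclic_path_distinct:
  assumes "acyclic E" "directed_path E g"
  shows "distinct g"
proof -
  have "g ! i \<noteq> g ! j" if "i < j" "j < length g" for i j
  proof
    assume "g ! i = g ! j"
    then have "(g ! j, g ! j) \<in> E\<^sup>+" using path_trancl[OF assms(2) that] by simp
    then show False using assms(1) unfolding acyclic_def by blast
  qed
  then show ?thesis unfolding distinct_conv_nth by (metis linorder_neqE_nat)
qed

lemma directed_path_snoc:
  assumes "directed_path E g" "(last g, z) \<in> E"
  shows "directed_path E (g @ [z])"
  unfolding directed_path_def
proof (intro conjI allI impI)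
  show "g @ [z] \<noteq> []" by simp
  fix i assume i: "Suc i < length (g @ [z])"
  show "((g @ [z]) ! i, (g @ [z]) ! Suc i) \<in> E"
  proof (cases "Suc i < length g")
    case True
    then show ?thesis using assms(1) by (simp add: directed_path_def nth_append)
  next
    case False
    then have ii: "i = length g - 1" "g \<noteq> []" using i assms(1) by (auto simp: directed_path_def)
    then show ?thesis using assms(2) by (simp add: nth_append last_conv_nth)
  qed
qed

lemma trancl_path:
  assumes "(x, y) \<in> E\<^sup>+"
  shows "\<exists>g. directed_path E g \<and> hd g = x \<and> last g = y"
  using assms
proof (induction rule: trancl_induct)
  case (base y)
  have "directed_path E [x, y]" using base by (auto simp: directed_path_def less_Suc_eq)
  then show ?case by force
next
  case (step y z)
  then obtain g where g: "directed_path E g" "hd g = x" "last g = y" by blast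
  have "directed_path E (g @ [z])" using directed_path_snoc[OF g(1)] g(3) step(2) by simp
  moreover have "hd (g @ [z]) = x" using g by (simp add: directed_path_def)
  ultimately show ?case by force
qed

lemma path_hd_le_last:
  fixes E :: "('a::order \<times> 'a) set"
  assumes ord: "\<forall>x y. x \<noteq> y \<longrightarrow> (x \<le> y \<longleftrightarrow> (x, y) \<in> E\<^sup>+)" and p: "directed_path E g"
  shows "hd g \<le> last g"
proof (cases "hd g = last g")
  case True then show ?thesis by simp
next
  case False
  have ne: "g \<noteq> []" using p by (simp add: directed_path_def)
  then have "length g > 1"
    using False by (cases g) (auto)
  then have "(g ! 0, g ! (length g - 1)) \<in> E\<^sup>+" using path_trancl[OF p] by simp
  then have "(hd g, last g) \<in> E\<^sup>+" using ne by (simp add: hd_conv_nth last_conv_nth)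
  then show ?thesis using ord False by blast
qed


lemma swap_generic:
  fixes q :: "nat \<Rightarrow> real" and \<phi> :: "nat \<Rightarrow> 'b \<Rightarrow> real"
  assumes qn: "\<And>n. n \<in> I \<Longrightarrow> 0 \<le> q n" and qs: "q summable_on I"
    and ph: "\<And>n. n \<in> I \<Longrightarrow> (\<phi> n has_sum c n) D" and phn: "\<And>n y. 0 \<le> \<phi> n y"
    and c01: "\<And>n. 0 \<le> c n \<and> c n \<le> 1"
    and Qs: "\<And>y. y \<in> D \<Longrightarrow> ((\<lambda>n. q n * \<phi> n y) has_sum Q y) I"
  shows "(Q has_sum (\<Sum>\<^sub>\<infinity>n\<in>I. q n * c n)) D"
proof -
  define H where "H = (\<lambda>(n, y). q n * \<phi> n y)"
  have inner: "((\<lambda>y. H (n, y)) has_sum q n * c n) D" if "n \<in> I" for n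
    unfolding H_def using has_sum_cmult_right[OF ph[OF that]] by simp
  have cs: "(\<lambda>n. q n * c n) summable_on I"
  proof (rule summable_on_comparison_test[OF qs])
    fix n assume "n \<in> I"
    then show "q n * c n \<le> q n" "0 \<le> q n * c n" using qn c01[of n]
      by (auto simp: mult_left_le)
  qed
  have Hs: "H summable_on Sigma I (\<lambda>_. D)"
    by (rule summable_on_SigmaI[where g = "\<lambda>n. q n * c n"]) (use inner cs qn phn in \<open>auto simp: H_def\<close>)
  define S where "S = infsum H (Sigma I (\<lambda>_. D))"
  have HS: "(H has_sum S) (I \<times> D)" using Hs unfolding S_def by (simp add: has_sum_iff)
  have "((\<lambda>n. q n * c n) has_sum S) I" by (rule has_sum_SigmaD[OF HS inner])
  then have Seq: "S = (\<Sum>\<^sub>\<infinity>n\<in>I. q n * c n)" by (simp add: has_sum_iff)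
  have HS': "((\<lambda>(y, n). H (n, y)) has_sum S) (D \<times> I)" using HS by (subst (asm) has_sum_swap)
  have "(Q has_sum S) D"
    by (rule has_sum_SigmaD[OF HS']) (use Qs in \<open>auto simp: H_def\<close>)
  then show ?thesis using Seq by simp
qed

lemma pf_out:
  assumes p: "directed_path E g" and d: "distinct g"
  shows "((\<lambda>y. path_flow g x y) has_sum (if x \<in> set g \<and> x \<noteq> last g then 1 else 0)) {y. (x, y) \<in> E}"
proof (cases "\<exists>i. Suc i < length g \<and> g ! i = x")
  case True
  then obtain i where i: "Suc i < length g" "g ! i = x" by blast
  define y0 where "y0 = g ! Suc i"
  have pf: "path_flow g x y = (if y = y0 then 1 else 0)" for y
  proof -
    have "(\<exists>j. Suc j < length g \<and> g ! j = x \<and> g ! Suc j = y) \<longleftrightarrow> y = y0"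
    proof
      assume "\<exists>j. Suc j < length g \<and> g ! j = x \<and> g ! Suc j = y"
      then obtain j where j: "Suc j < length g" "g ! j = x" "g ! Suc j = y" by blast
      have "j = i" using nth_eq_iff_index_eq[OF d, of j i] j i by simp
      then show "y = y0" using j by (simp add: y0_def)
    next
      assume "y = y0" then show "\<exists>j. Suc j < length g \<and> g ! j = x \<and> g ! Suc j = y"
        using i by (auto simp: y0_def)
    qed
    then show ?thesis unfolding path_flow_def by simp
  qed
  have e: "(x, y0) \<in> E" using p i unfolding directed_path_def y0_def by blast
  have v: "x \<in> set g \<and> x \<noteq> last g"
  proof
    show "x \<in> set g" using i by auto
    have gne: "g \<noteq> []"
    proof
      assume "g = []" then show False using i(1) by simp
    qed
    have "last g = g ! (length g - 1)" using gne by (rule last_conv_nth)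
    moreover have "g ! (length g - 1) \<noteq> g ! i" using nth_eq_iff_index_eq[OF d, of "length g - 1" i] i by simp
    ultimately show "x \<noteq> last g" using i by simp
  qed
  show ?thesis unfolding pf using e v
    by (intro has_sum_finite_neutralI[where B = "{y0}"]) auto
next
  case False
  have pf: "path_flow g x y = 0" for y using False unfolding path_flow_def by auto
  have v: "\<not> (x \<in> set g \<and> x \<noteq> last g)"
  proof
    assume a: "x \<in> set g \<and> x \<noteq> last g"
    then obtain i where i: "i < length g" "g ! i = x" by (auto simp: in_set_conv_nth)
    then have "i = length g - 1" using False by (metis Suc_lessI diff_Suc_1)
    moreover have "g \<noteq> []" using i by auto
    ultimately show False using a i by (simp add: last_conv_nth)
  qed
  have "(if x \<in> set g \<and> x \<noteq> last g then 1 else 0) = (0::real)" using v by auto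
  then show ?thesis unfolding pf by simp
qed

lemma pf_in:
  assumes p: "directed_path E g" and d: "distinct g"
  shows "((\<lambda>y. path_flow g y x) has_sum (if x \<in> set g \<and> x \<noteq> hd g then 1 else 0)) {y. (y, x) \<in> E}"
proof (cases "\<exists>i. Suc i < length g \<and> g ! Suc i = x")
  case True
  then obtain i where i: "Suc i < length g" "g ! Suc i = x" by blast
  define y0 where "y0 = g ! i"
  have pf: "path_flow g y x = (if y = y0 then 1 else 0)" for y
  proof -
    have "(\<exists>j. Suc j < length g \<and> g ! j = y \<and> g ! Suc j = x) \<longleftrightarrow> y = y0"
    proof
      assume "\<exists>j. Suc j < length g \<and> g ! j = y \<and> g ! Suc j = x"
      then obtain j where j: "Suc j < length g" "g ! j = y" "g ! Suc j = x" by blast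
      have "Suc j = Suc i" using nth_eq_iff_index_eq[OF d, of "Suc j" "Suc i"] j i by simp
      then show "y = y0" using j by (simp add: y0_def)
    next
      assume "y = y0" then show "\<exists>j. Suc j < length g \<and> g ! j = y \<and> g ! Suc j = x"
        using i by (auto simp: y0_def)
    qed
    then show ?thesis unfolding path_flow_def by simp
  qed
  have e: "(y0, x) \<in> E" using p i unfolding directed_path_def y0_def by blast
  have v: "x \<in> set g \<and> x \<noteq> hd g"
  proof
    show "x \<in> set g" using i by (metis nth_mem)
    have gne: "g \<noteq> []"
    proof
      assume "g = []" then show False using i(1) by simp
    qed
    have "hd g = g ! 0" using gne by (rule hd_conv_nth)
    moreover have l0: "0 < length g" using i(1) by arith
    have "g ! 0 \<noteq> g ! Suc i" using nth_eq_iff_index_eq[OF d l0 i(1)] by simp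
    moreover note this
    ultimately show "x \<noteq> hd g" using i by simp
  qed
  show ?thesis unfolding pf using e v
    by (intro has_sum_finite_neutralI[where B = "{y0}"]) auto
next
  case False
  have pf: "path_flow g y x = 0" for y using False unfolding path_flow_def by auto
  have v: "\<not> (x \<in> set g \<and> x \<noteq> hd g)"
  proof
    assume a: "x \<in> set g \<and> x \<noteq> hd g"
    then obtain i where i: "i < length g" "g ! i = x" by (auto simp: in_set_conv_nth)
    have "i \<noteq> 0"
    proof
      assume "i = 0"
      moreover have "g \<noteq> []" using i(1) by auto
      ultimately have "x = hd g" using i(2) by (simp add: hd_conv_nth)
      then show False using a by simp
    qed
    then obtain k where "i = Suc k" by (cases i) auto
    then show False using False i by blast
  qed
  have "(if x \<in> set g \<and> x \<noteq> hd g then 1 else 0) = (0::real)" using v by auto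
  then show ?thesis unfolding pf by simp
qed


definition dfun :: "'a list \<Rightarrow> 'a \<Rightarrow> real" where
  "dfun g x = (if x = hd g then 1 else 0) - (if x = last g then 1 else 0)"

lemma summable_q_c:
  fixes q :: "nat \<Rightarrow> real"
  assumes qn: "\<And>n. n \<in> I \<Longrightarrow> 0 \<le> q n" and qs: "q summable_on I" and c: "\<And>n. 0 \<le> c n \<and> c n \<le> 1"
  shows "(\<lambda>n. q n * c n) summable_on I"
proof (rule summable_on_comparison_test[OF qs])
  fix n assume "n \<in> I"
  then show "q n * c n \<le> q n" "0 \<le> q n * c n" using qn c[of n] by (auto simp: mult_left_le)
qed

lemma path_flow_nonneg: "0 \<le> path_flow g x y"
  by (simp add: path_flow_def)

lemma L_div:
  fixes I :: "nat set" and \<gamma> :: "nat \<Rightarrow> 'a list" and q :: "nat \<Rightarrow> real"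
  assumes paths: "\<And>n. n \<in> I \<Longrightarrow> directed_path E (\<gamma> n) \<and> distinct (\<gamma> n)"
    and qn: "\<And>n. n \<in> I \<Longrightarrow> 0 \<le> q n" and qs: "q summable_on I"
    and Q: "\<And>x y. (x, y) \<in> E \<Longrightarrow> ((\<lambda>n. q n * path_flow (\<gamma> n) x y) has_sum Q x y) I"
  shows "div_defined E Q x \<and> divergence E Q x = (\<Sum>\<^sub>\<infinity>n\<in>I. q n * dfun (\<gamma> n) x)"
proof -
  define co where "co n = (if x \<in> set (\<gamma> n) \<and> x \<noteq> last (\<gamma> n) then 1 else 0 :: real)" for n
  define ci where "ci n = (if x \<in> set (\<gamma> n) \<and> x \<noteq> hd (\<gamma> n) then 1 else 0 :: real)" for n
  have hout: "((\<lambda>y. Q x y) has_sum (\<Sum>\<^sub>\<infinity>n\<in>I. q n * co n)) {y. (x, y) \<in> E}"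
  proof (rule swap_generic[where \<phi> = "\<lambda>n y. path_flow (\<gamma> n) x y"])
    show "\<And>n. n \<in> I \<Longrightarrow> 0 \<le> q n" by (rule qn)
    show "q summable_on I" by (rule qs)
    show "((\<lambda>y. path_flow (\<gamma> n) x y) has_sum co n) {y. (x, y) \<in> E}" if "n \<in> I" for n
      unfolding co_def by (rule pf_out) (use paths[OF that] in auto)
    show "0 \<le> path_flow (\<gamma> n) x y" for n y by (rule path_flow_nonneg)
    show "0 \<le> co n \<and> co n \<le> 1" for n by (simp add: co_def)
    show "((\<lambda>n. q n * path_flow (\<gamma> n) x y) has_sum Q x y) I" if "y \<in> {y. (x, y) \<in> E}" for y
      using Q that by simp
  qed
  have hin: "((\<lambda>y. Q y x) has_sum (\<Sum>\<^sub>\<infinity>n\<in>I. q n * ci n)) {y. (y, x) \<in> E}"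
  proof (rule swap_generic[where \<phi> = "\<lambda>n y. path_flow (\<gamma> n) y x"])
    show "\<And>n. n \<in> I \<Longrightarrow> 0 \<le> q n" by (rule qn)
    show "q summable_on I" by (rule qs)
    show "((\<lambda>y. path_flow (\<gamma> n) y x) has_sum ci n) {y. (y, x) \<in> E}" if "n \<in> I" for n
      unfolding ci_def by (rule pf_in) (use paths[OF that] in auto)
    show "0 \<le> path_flow (\<gamma> n) y x" for n y by (rule path_flow_nonneg)
    show "0 \<le> ci n \<and> ci n \<le> 1" for n by (simp add: ci_def)
    show "((\<lambda>n. q n * path_flow (\<gamma> n) y x) has_sum Q y x) I" if "y \<in> {y. (y, x) \<in> E}" for y
      using Q that by simp
  qed
  have dd: "div_defined E Q x" unfolding div_defined_def using hout hin by (auto dest: has_sum_imp_summable)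
  have s1: "((\<lambda>n. q n * co n) has_sum (\<Sum>\<^sub>\<infinity>n\<in>I. q n * co n)) I"
    using summable_q_c[OF qn qs, of co] by (simp add: co_def has_sum_iff)
  have s2: "((\<lambda>n. q n * ci n) has_sum (\<Sum>\<^sub>\<infinity>n\<in>I. q n * ci n)) I"
    using summable_q_c[OF qn qs, of ci] by (simp add: ci_def has_sum_iff)
  have s2': "((\<lambda>n. - 1 * (q n * ci n)) has_sum - 1 * (\<Sum>\<^sub>\<infinity>n\<in>I. q n * ci n)) I"
    by (rule has_sum_cmult_right[OF s2])
  have s3: "((\<lambda>n. q n * co n + - 1 * (q n * ci n)) has_sum
      (\<Sum>\<^sub>\<infinity>n\<in>I. q n * co n) + - 1 * (\<Sum>\<^sub>\<infinity>n\<in>I. q n * ci n)) I"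
    by (rule has_sum_add[OF s1 s2'])
  have eq: "q n * co n + - 1 * (q n * ci n) = q n * dfun (\<gamma> n) x" if "n \<in> I" for n
  proof -
    have ne: "\<gamma> n \<noteq> []" using paths[OF that] by (simp add: directed_path_def)
    have "co n - ci n = dfun (\<gamma> n) x"
      using ne unfolding co_def ci_def dfun_def by (auto simp: hd_in_set last_in_set)
    then show ?thesis by (simp add: algebra_simps flip: right_diff_distrib)
  qed
  have "((\<lambda>n. q n * dfun (\<gamma> n) x) has_sum
      (\<Sum>\<^sub>\<infinity>n\<in>I. q n * co n) + - 1 * (\<Sum>\<^sub>\<infinity>n\<in>I. q n * ci n)) I"
    using iffD1[OF has_sum_cong[of I "\<lambda>n. q n * co n + - 1 * (q n * ci n)" "\<lambda>n. q n * dfun (\<gamma> n) x"] s3] eq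
    by blast
  then have "(\<Sum>\<^sub>\<infinity>n\<in>I. q n * dfun (\<gamma> n) x) = (\<Sum>\<^sub>\<infinity>n\<in>I. q n * co n) + - 1 * (\<Sum>\<^sub>\<infinity>n\<in>I. q n * ci n)"
    using has_sum_iff by blast
  then have "(\<Sum>\<^sub>\<infinity>n\<in>I. q n * dfun (\<gamma> n) x) = (\<Sum>\<^sub>\<infinity>n\<in>I. q n * co n) - (\<Sum>\<^sub>\<infinity>n\<in>I. q n * ci n)"
    by simp
  moreover have "divergence E Q x = (\<Sum>\<^sub>\<infinity>n\<in>I. q n * co n) - (\<Sum>\<^sub>\<infinity>n\<in>I. q n * ci n)"
  proof -
    have a: "(\<Sum>\<^sub>\<infinity>y\<in>{y. (x, y) \<in> E}. Q x y) = (\<Sum>\<^sub>\<infinity>n\<in>I. q n * co n)"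
      using has_sum_iff[THEN iffD1, OF hout] by (rule conjunct2)
    have b: "(\<Sum>\<^sub>\<infinity>y\<in>{y. (y, x) \<in> E}. Q y x) = (\<Sum>\<^sub>\<infinity>n\<in>I. q n * ci n)"
      using has_sum_iff[THEN iffD1, OF hin] by (rule conjunct2)
    show ?thesis unfolding divergence_def a b ..
  qed
  ultimately show ?thesis using dd by simp
qed


lemma pmf_measure_infsum: "measure_pmf.prob p A = infsum (pmf p) A"
  using measure_pmf_conv_infsetsum[of p A] infsetsum_infsum[OF pmf_abs_summable, of p A] by simp

lemma pmf_ind_has_sum:
  "((\<lambda>z. pmf p z * (if P z then 1 else 0)) has_sum measure_pmf.prob p {z. P z}) UNIV"
proof -
  have "(pmf p has_sum measure_pmf.prob p {z. P z}) {z. P z}"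
    unfolding pmf_measure_infsum using pmf_summable[of p "{z. P z}"] by (simp add: has_sum_iff)
  moreover have "(pmf p has_sum measure_pmf.prob p {z. P z}) {z. P z} =
     ((\<lambda>z. pmf p z * (if P z then 1 else 0)) has_sum measure_pmf.prob p {z. P z}) UNIV"
    by (rule has_sum_cong_neutral) auto
  ultimately show ?thesis by simp
qed

lemma coupling_set:
  assumes "order_compatible \<rho>" "z \<in> set_pmf \<rho>"
  shows "fst z \<le> snd z"
proof -
  have "AE z in measure_pmf \<rho>. z \<in> {(x, y). x \<le> y}"
    using assms(1) unfolding order_compatible_def by (subst (asm) measure_pmf.prob_eq_1) auto
  then show ?thesis using assms(2) unfolding AE_measure_pmf_iff by (cases z) auto
qed

lemma coupling_div:
  fixes \<rho> :: "(('a::order) \<times> 'a) pmf"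
  assumes c: "is_coupling \<rho> \<mu>1 \<mu>2"
  shows "((\<lambda>z. pmf \<rho> z * ((if x = fst z then 1 else 0) - (if x = snd z then 1 else 0))) has_sum
           (pmf \<mu>1 x - pmf \<mu>2 x)) UNIV"
proof -
  have h1: "((\<lambda>z. pmf \<rho> z * (if fst z = x then 1 else 0)) has_sum pmf \<mu>1 x) UNIV"
  proof -
    have "pmf \<mu>1 x = measure_pmf.prob \<rho> {z. fst z = x}"
      using c unfolding is_coupling_def by (auto simp: pmf_map vimage_def)
    then show ?thesis using pmf_ind_has_sum[of \<rho> "\<lambda>z. fst z = x"] by simp
  qed
  have h2: "((\<lambda>z. pmf \<rho> z * (if snd z = x then 1 else 0)) has_sum pmf \<mu>2 x) UNIV"
  proof -
    have "pmf \<mu>2 x = measure_pmf.prob \<rho> {z. snd z = x}"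
      using c unfolding is_coupling_def by (auto simp: pmf_map vimage_def)
    then show ?thesis using pmf_ind_has_sum[of \<rho> "\<lambda>z. snd z = x"] by simp
  qed
  have "((\<lambda>z. pmf \<rho> z * (if fst z = x then 1 else 0) + - 1 * (pmf \<rho> z * (if snd z = x then 1 else 0)))
      has_sum (pmf \<mu>1 x + - 1 * pmf \<mu>2 x)) UNIV"
    by (rule has_sum_add[OF h1 has_sum_cmult_right[OF h2]])
  moreover have "(\<lambda>z. pmf \<rho> z * (if fst z = x then 1 else 0) + - 1 * (pmf \<rho> z * (if snd z = x then 1 else 0)))
      = (\<lambda>z. pmf \<rho> z * ((if x = fst z then 1 else 0) - (if x = snd z then 1 else 0)))"
    by (auto simp: fun_eq_iff)
  ultimately show ?thesis by simp
qed


definition pth :: "('a::order \<times> 'a) set \<Rightarrow> 'a \<times> 'a \<Rightarrow> 'a list" where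
  "pth E p = (if fst p \<noteq> snd p \<and> fst p \<le> snd p
     then (SOME g. directed_path E g \<and> hd g = fst p \<and> last g = snd p) else [fst p])"

lemma pth_props:
  fixes E :: "('a::order \<times> 'a) set"
  assumes acyc: "acyclic E" and ord: "\<forall>x y. x \<noteq> y \<longrightarrow> (x \<le> y \<longleftrightarrow> (x, y) \<in> E\<^sup>+)"
  shows "directed_path E (pth E p) \<and> distinct (pth E p) \<and>
         (fst p \<le> snd p \<longrightarrow> hd (pth E p) = fst p \<and> last (pth E p) = snd p)"
proof (cases "fst p \<noteq> snd p \<and> fst p \<le> snd p")
  case True
  then have "(fst p, snd p) \<in> E\<^sup>+" using ord by blast
  then have ex: "\<exists>g. directed_path E g \<and> hd g = fst p \<and> last g = snd p" by (rule trancl_path)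
  have "pth E p = (SOME g. directed_path E g \<and> hd g = fst p \<and> last g = snd p)"
    using True by (simp add: pth_def)
  then have s: "directed_path E (pth E p) \<and> hd (pth E p) = fst p \<and> last (pth E p) = snd p"
    using someI_ex[OF ex] by simp
  then show ?thesis using acyclic_path_distinct[OF acyc] by blast
next
  case False
  then have "pth E p = [fst p]" unfolding pth_def by (rule if_not_P)
  moreover have "directed_path E [fst p]" by (simp add: directed_path_def)
  ultimately show ?thesis using False by auto
qed

lemma coupling_flow:
  fixes E :: "('a::{countable, order} \<times> 'a) set" and \<mu>1 \<mu>2 :: "'a pmf"
  assumes acyc: "acyclic E" and ord: "\<forall>x y. x \<noteq> y \<longrightarrow> (x \<le> y \<longleftrightarrow> (x, y) \<in> E\<^sup>+)"
    and c: "is_coupling \<rho> \<mu>1 \<mu>2" and oc: "order_compatible \<rho>"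
  shows "\<exists>Q. is_flow E Q \<and> finitely_decomposable E Q \<and>
               (\<forall>x. div_defined E Q x \<and> divergence E Q x = pmf \<mu>1 x - pmf \<mu>2 x)"
proof -
  define I :: "nat set" where "I = range (to_nat :: 'a \<times> 'a \<Rightarrow> nat)"
  define \<gamma> where "\<gamma> n = pth E (from_nat n :: 'a \<times> 'a)" for n
  define q where "q n = pmf \<rho> (from_nat n :: 'a \<times> 'a)" for n
  define Q where "Q x y = (\<Sum>\<^sub>\<infinity>n\<in>I. q n * path_flow (\<gamma> n) x y)" for x y
  note PP = pth_props[OF acyc ord]
  have paths: "directed_path E (\<gamma> n) \<and> distinct (\<gamma> n)" for n using PP unfolding \<gamma>_def by blast
  have qn: "0 \<le> q n" for n by (simp add: q_def)
  have qcomp: "q \<circ> to_nat = pmf \<rho>" by (simp add: fun_eq_iff q_def)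
  have qs: "q summable_on I"
    unfolding I_def summable_on_reindex[OF inj_on_to_nat] qcomp by (rule pmf_summable)
  have Qs: "((\<lambda>n. q n * path_flow (\<gamma> n) x y) has_sum Q x y) I" for x y
  proof -
    have "(\<lambda>n. q n * path_flow (\<gamma> n) x y) summable_on I"
      by (rule summable_q_c[OF _ qs]) (simp_all add: qn path_flow_def)
    then show ?thesis unfolding Q_def by (simp add: has_sum_iff)
  qed
  have flow: "is_flow E Q" unfolding is_flow_def Q_def
  proof (intro allI impI infsum_nonneg)
    fix x y n show "0 \<le> q n * path_flow (\<gamma> n) x y" by (intro mult_nonneg_nonneg qn path_flow_nonneg)
  qed
  have fd: "finitely_decomposable E Q"
    unfolding finitely_decomposable_def self_avoiding_def
  proof (intro exI[of _ I] exI[of _ \<gamma>] exI[of _ q] conjI ballI allI impI)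
    show "q summable_on I" by (rule qs)
    fix n assume "n \<in> I"
    show "directed_path E (\<gamma> n)" "distinct (\<gamma> n)" using paths by auto
    show "0 \<le> q n" by (rule qn)
  next
    fix x y show "((\<lambda>n. q n * path_flow (\<gamma> n) x y) has_sum Q x y) I" by (rule Qs)
  qed
  have dv: "div_defined E Q x \<and> divergence E Q x = pmf \<mu>1 x - pmf \<mu>2 x" for x
  proof -
    have L: "div_defined E Q x \<and> divergence E Q x = (\<Sum>\<^sub>\<infinity>n\<in>I. q n * dfun (\<gamma> n) x)"
      by (rule L_div) (use paths qn qs Qs in auto)
    have "(\<Sum>\<^sub>\<infinity>n\<in>I. q n * dfun (\<gamma> n) x) = (\<Sum>\<^sub>\<infinity>(z::'a \<times> 'a)\<in>UNIV. q (to_nat z) * dfun (\<gamma> (to_nat z)) x)"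
      unfolding I_def by (subst infsum_reindex) (auto simp: comp_def)
    also have "\<dots> = (\<Sum>\<^sub>\<infinity>z\<in>UNIV. pmf \<rho> z * ((if x = fst z then 1 else 0) - (if x = snd z then 1 else 0)))"
    proof (rule infsum_cong)
      fix z :: "'a \<times> 'a"
      show "q (to_nat z) * dfun (\<gamma> (to_nat z)) x = pmf \<rho> z * ((if x = fst z then 1 else 0) - (if x = snd z then 1 else 0))"
      proof (cases "z \<in> set_pmf \<rho>")
        case True
        then have "fst z \<le> snd z" using coupling_set[OF oc] by blast
        then have "hd (pth E z) = fst z \<and> last (pth E z) = snd z" using PP by blast
        then show ?thesis by (simp add: q_def \<gamma>_def dfun_def)
      next
        case False
        then show ?thesis by (simp add: q_def set_pmf_iff)
      qed
    qed
    also have "\<dots> = pmf \<mu>1 x - pmf \<mu>2 x" using coupling_div[OF c, of x] by (simp add: has_sum_iff)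
    finally show ?thesis using L by simp
  qed
  show ?thesis using flow fd dv by blast
qed


lemma exp_infsum:
  fixes f :: "'a \<Rightarrow> real"
  assumes B: "\<And>x. \<bar>f x\<bar> \<le> B"
  shows "((\<lambda>x. pmf p x * f x) has_sum measure_pmf.expectation p f) UNIV"
proof -
  have s: "(\<lambda>x. norm (pmf p x * f x)) summable_on UNIV"
  proof (rule summable_on_comparison_test[OF summable_on_cmult_right[OF pmf_summable, of B]])
    fix x
    show "norm (pmf p x * f x) \<le> B * pmf p x"
      using mult_right_mono[OF B[of x] pmf_nonneg[of p x]] by (simp add: abs_mult mult.commute)
    show "0 \<le> norm (pmf p x * f x)" by simp
  qed
  then have a: "Infinite_Set_Sum.abs_summable_on (\<lambda>x. pmf p x * f x) UNIV"
    using abs_summable_equivalent by blast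
  have "measure_pmf.expectation p f = infsum (\<lambda>x. pmf p x * f x) UNIV"
    using pmf_expectation_eq_infsetsum[of p f] infsetsum_infsum[OF a] by simp
  moreover have "(\<lambda>x. pmf p x * f x) summable_on UNIV" using s by (rule abs_summable_summable)
  ultimately show ?thesis by (simp add: has_sum_iff)
qed

lemma fin_supp_summable:
  fixes g :: "'a \<Rightarrow> real"
  assumes "\<And>x. x \<notin> {h, l} \<Longrightarrow> g x = 0"
  shows "g summable_on UNIV"
  by (rule finite_nonzero_values_imp_summable_on, rule finite_subset[of _ "{h, l}"]) (use assms in auto)

lemma dfun_sum:
  fixes g :: "'a list" and f :: "'a \<Rightarrow> real"
  shows "((\<lambda>x. c * dfun g x * f x) has_sum c * (f (hd g) - f (last g))) UNIV"
proof (rule has_sum_finite_neutralI[where B = "{hd g, last g}"])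
  show "c * dfun g x * f x = 0" if "x \<in> UNIV - {hd g, last g}" for x using that by (simp add: dfun_def)
  show "c * (f (hd g) - f (last g)) = (\<Sum>x\<in>{hd g, last g}. c * dfun g x * f x)"
    by (cases "hd g = last g") (auto simp: dfun_def algebra_simps)
qed auto

lemma dfun_abs_bound:
  fixes f :: "'a \<Rightarrow> real"
  assumes B: "\<And>x. \<bar>f x\<bar> \<le> B" and c: "0 \<le> c"
  shows "(\<Sum>\<^sub>\<infinity>x. norm (c * dfun g x * f x)) \<le> 2 * B * c"
proof -
  define h where "h = hd g" define l where "l = last g"
  define u where "u x = c * B * ((if x = h then 1 else 0) + (if x = l then 1 else 0))" for x
  have B0: "0 \<le> B" using B[of undefined] by linarith
  have le: "norm (c * dfun g x * f x) \<le> u x" for x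
  proof -
    have "\<bar>dfun g x\<bar> \<le> (if x = h then 1 else 0) + (if x = l then 1 else 0)"
      by (simp add: dfun_def h_def l_def)
    then have d1: "\<bar>c * dfun g x\<bar> \<le> c * ((if x = h then 1 else 0) + (if x = l then 1 else 0))"
      using c by (simp add: abs_mult mult_left_mono)
    have d2: "0 \<le> c * ((if x = h then 1 else 0) + (if x = l then 1 else 0))" using c by simp
    have "\<bar>c * dfun g x\<bar> * \<bar>f x\<bar> \<le> (c * ((if x = h then 1 else 0) + (if x = l then 1 else 0))) * B"
      by (rule mult_mono[OF d1 B[of x] d2 abs_ge_zero])
    then show ?thesis by (simp add: u_def abs_mult algebra_simps)
  qed
  have s1: "(\<lambda>x. norm (c * dfun g x * f x)) summable_on UNIV"
    by (rule fin_supp_summable[where h = h and l = l]) (simp add: dfun_def h_def l_def)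
  have s2: "u summable_on UNIV"
    by (rule fin_supp_summable[where h = h and l = l]) (simp add: u_def)
  have "infsum u UNIV = (\<Sum>x\<in>{h, l}. u x)"
    by (rule infsum_cong_neutral[THEN trans, OF _ _ _ infsum_finite]) (auto simp: u_def)
  also have "\<dots> = 2 * B * c" by (cases "h = l") (auto simp: u_def algebra_simps)
  finally have "infsum u UNIV = 2 * B * c" .
  moreover have "(\<Sum>\<^sub>\<infinity>x. norm (c * dfun g x * f x)) \<le> infsum u UNIV"
    by (rule infsum_mono[OF s1 s2 le])
  ultimately show ?thesis by simp
qed


lemma flow_stoch:
  fixes E :: "('a::order \<times> 'a) set" and \<mu>1 \<mu>2 :: "'a pmf"
  assumes ord: "\<forall>x y. x \<noteq> y \<longrightarrow> (x \<le> y \<longleftrightarrow> (x, y) \<in> E\<^sup>+)" and fd: "finitely_decomposable E Q"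
    and dv: "\<forall>x. div_defined E Q x \<and> divergence E Q x = pmf \<mu>1 x - pmf \<mu>2 x"
  shows "stoch_le \<mu>1 \<mu>2"
proof -
  obtain I :: "nat set" and \<gamma> :: "nat \<Rightarrow> 'a list" and q :: "nat \<Rightarrow> real" where
    P: "\<forall>n\<in>I. directed_path E (\<gamma> n) \<and> self_avoiding (\<gamma> n) \<and> q n \<ge> 0"
    and qs: "q summable_on I"
    and Qh: "\<forall>x y. (x, y) \<in> E \<longrightarrow> ((\<lambda>n. q n * path_flow (\<gamma> n) x y) has_sum Q x y) I"
    using fd unfolding finitely_decomposable_def by blast
  have qn: "\<And>n. n \<in> I \<Longrightarrow> 0 \<le> q n" using P by blast
  have diff: "pmf \<mu>1 x - pmf \<mu>2 x = (\<Sum>\<^sub>\<infinity>n\<in>I. q n * dfun (\<gamma> n) x)" for x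
  proof -
    have "div_defined E Q x \<and> divergence E Q x = (\<Sum>\<^sub>\<infinity>n\<in>I. q n * dfun (\<gamma> n) x)"
      by (rule L_div) (use P qs Qh in \<open>auto simp: self_avoiding_def\<close>)
    then show ?thesis using dv by simp
  qed
  show ?thesis unfolding stoch_le_def
  proof (intro allI impI)
    fix f :: "'a \<Rightarrow> real" assume b: "bounded (range f)" and m: "mono f"
    obtain B where B: "\<And>x. \<bar>f x\<bar> \<le> B" using b unfolding bounded_real by blast
    define g where "g = (\<lambda>(n, x). q n * dfun (\<gamma> n) x * f x)"
    have inner: "((\<lambda>x. g (n, x)) has_sum q n * (f (hd (\<gamma> n)) - f (last (\<gamma> n)))) UNIV" for n
      unfolding g_def using dfun_sum[of "q n" "\<gamma> n" f] by simp
    have nsum: "((\<lambda>x. norm (g (n, x))) has_sum (\<Sum>\<^sub>\<infinity>x. norm (g (n, x)))) UNIV" for n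
    proof -
      have "(\<lambda>x. norm (g (n, x))) summable_on UNIV"
        by (rule fin_supp_summable[where h = "hd (\<gamma> n)" and l = "last (\<gamma> n)"]) (simp add: g_def dfun_def)
      then show ?thesis by (simp add: has_sum_iff)
    qed
    have outer: "(\<lambda>n. \<Sum>\<^sub>\<infinity>x. norm (g (n, x))) summable_on I"
    proof (rule summable_on_comparison_test[OF summable_on_cmult_right[OF qs, of "2 * B"]])
      fix n assume n: "n \<in> I"
      show "(\<Sum>\<^sub>\<infinity>x. norm (g (n, x))) \<le> 2 * B * q n"
        unfolding g_def using dfun_abs_bound[OF B qn[OF n], of "\<gamma> n"] by simp
      show "0 \<le> (\<Sum>\<^sub>\<infinity>x. norm (g (n, x)))" by (rule infsum_nonneg) simp
    qed
    have ns: "(\<lambda>z. norm (g z)) summable_on Sigma I (\<lambda>_. UNIV)"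
      by (rule summable_on_SigmaI[where g = "\<lambda>n. \<Sum>\<^sub>\<infinity>x. norm (g (n, x))"]) (use nsum outer in auto)
    have gs: "(\<lambda>(n, x). q n * dfun (\<gamma> n) x * f x) summable_on I \<times> UNIV"
      using abs_summable_summable[OF ns] unfolding g_def by simp
    have swap: "(\<Sum>\<^sub>\<infinity>n\<in>I. \<Sum>\<^sub>\<infinity>x. q n * dfun (\<gamma> n) x * f x) = (\<Sum>\<^sub>\<infinity>x. \<Sum>\<^sub>\<infinity>n\<in>I. q n * dfun (\<gamma> n) x * f x)"
      using infsum_swap_banach[OF gs] by simp
    have lhs: "(\<Sum>\<^sub>\<infinity>n\<in>I. \<Sum>\<^sub>\<infinity>x. q n * dfun (\<gamma> n) x * f x) = (\<Sum>\<^sub>\<infinity>n\<in>I. q n * (f (hd (\<gamma> n)) - f (last (\<gamma> n))))"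
      by (rule infsum_cong) (use inner[unfolded g_def] in \<open>simp add: has_sum_iff\<close>)
    have rhs: "(\<Sum>\<^sub>\<infinity>n\<in>I. q n * dfun (\<gamma> n) x * f x) = (pmf \<mu>1 x - pmf \<mu>2 x) * f x" for x
      using infsum_cmult_left'[where f = "\<lambda>n. q n * dfun (\<gamma> n) x" and A = I and c = "f x"] diff[of x] by simp
    have e1: "((\<lambda>x. pmf \<mu>1 x * f x) has_sum measure_pmf.expectation \<mu>1 f) UNIV" by (rule exp_infsum[OF B])
    have e2: "((\<lambda>x. pmf \<mu>2 x * f x) has_sum measure_pmf.expectation \<mu>2 f) UNIV" by (rule exp_infsum[OF B])
    have "((\<lambda>x. pmf \<mu>1 x * f x + - 1 * (pmf \<mu>2 x * f x)) has_sum
        measure_pmf.expectation \<mu>1 f + - 1 * measure_pmf.expectation \<mu>2 f) UNIV"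
      by (rule has_sum_add[OF e1 has_sum_cmult_right[OF e2]])
    moreover have "(\<lambda>x. pmf \<mu>1 x * f x + - 1 * (pmf \<mu>2 x * f x)) = (\<lambda>x. (pmf \<mu>1 x - pmf \<mu>2 x) * f x)"
      by (simp add: fun_eq_iff algebra_simps)
    ultimately have hs: "((\<lambda>x. (pmf \<mu>1 x - pmf \<mu>2 x) * f x) has_sum
        measure_pmf.expectation \<mu>1 f + - 1 * measure_pmf.expectation \<mu>2 f) UNIV" by simp
    have "measure_pmf.expectation \<mu>1 f - measure_pmf.expectation \<mu>2 f = (\<Sum>\<^sub>\<infinity>x. (pmf \<mu>1 x - pmf \<mu>2 x) * f x)"
      using has_sum_iff[THEN iffD1, OF hs] by simp
    also have "\<dots> = (\<Sum>\<^sub>\<infinity>n\<in>I. q n * (f (hd (\<gamma> n)) - f (last (\<gamma> n))))"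
      using swap lhs rhs by simp
    also have "\<dots> \<le> 0"
    proof -
      have "0 \<le> (\<Sum>\<^sub>\<infinity>n\<in>I. - (q n * (f (hd (\<gamma> n)) - f (last (\<gamma> n)))))"
      proof (rule infsum_nonneg)
        fix n assume n: "n \<in> I"
        have "hd (\<gamma> n) \<le> last (\<gamma> n)" using path_hd_le_last[OF ord] P n by blast
        then have "f (hd (\<gamma> n)) \<le> f (last (\<gamma> n))" using m by (simp add: mono_def)
        then show "0 \<le> - (q n * (f (hd (\<gamma> n)) - f (last (\<gamma> n))))"
          using qn[OF n] by (simp add: mult_nonneg_nonpos)
      qed
      then show ?thesis by (simp add: infsum_uminus)
    qed
    finally show "measure_pmf.expectation \<mu>1 f \<le> measure_pmf.expectation \<mu>2 f" by simp
  qed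
qed


theorem theorem2p3:
  fixes E :: "('a::{countable, order} \<times> 'a) set"
    and \<mu>1 \<mu>2 :: "'a pmf"
  assumes "infinite (UNIV :: 'a set)"
    and "\<forall>x. (x, x) \<notin> E"
    and "acyclic E"
    and "\<forall>x y. x \<noteq> y \<longrightarrow> (x \<le> y \<longleftrightarrow> (x, y) \<in> E\<^sup>+)"
  shows "(stoch_le \<mu>1 \<mu>2 \<longleftrightarrow> (\<exists>\<rho>. is_coupling \<rho> \<mu>1 \<mu>2 \<and> order_compatible \<rho>))
       \<and> ((\<exists>\<rho>. is_coupling \<rho> \<mu>1 \<mu>2 \<and> order_compatible \<rho>) \<longleftrightarrow>
          (\<exists>Q. is_flow E Q \<and> finitely_decomposable E Q \<and>
               (\<forall>x. div_defined E Q x \<and> divergence E Q x = pmf \<mu>1 x - pmf \<mu>2 x)))"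
proof (intro conjI iffI)
  assume "stoch_le \<mu>1 \<mu>2"
  then show "\<exists>\<rho>. is_coupling \<rho> \<mu>1 \<mu>2 \<and> order_compatible \<rho>" by (rule strassen)
next
  assume "\<exists>\<rho>. is_coupling \<rho> \<mu>1 \<mu>2 \<and> order_compatible \<rho>"
  then show "stoch_le \<mu>1 \<mu>2" using coupling_stoch by blast
next
  assume "\<exists>\<rho>. is_coupling \<rho> \<mu>1 \<mu>2 \<and> order_compatible \<rho>"
  then obtain \<rho> where "is_coupling \<rho> \<mu>1 \<mu>2" "order_compatible \<rho>" by blast
  then show "\<exists>Q. is_flow E Q \<and> finitely_decomposable E Q \<and>
               (\<forall>x. div_defined E Q x \<and> divergence E Q x = pmf \<mu>1 x - pmf \<mu>2 x)"
    using coupling_flow[OF assms(3) assms(4)] by blast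
next
  assume "\<exists>Q. is_flow E Q \<and> finitely_decomposable E Q \<and>
               (\<forall>x. div_defined E Q x \<and> divergence E Q x = pmf \<mu>1 x - pmf \<mu>2 x)"
  then obtain Q where "finitely_decomposable E Q"
    "\<forall>x. div_defined E Q x \<and> divergence E Q x = pmf \<mu>1 x - pmf \<mu>2 x" by blast
  then have "stoch_le \<mu>1 \<mu>2" using flow_stoch[OF assms(4)] by blast
  then show "\<exists>\<rho>. is_coupling \<rho> \<mu>1 \<mu>2 \<and> order_compatible \<rho>" by (rule strassen)
qed

end
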